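(* Assume $\beta>0$. Let $\lambda\in\mathfrak Q$ with $\tilde I(\lambda)<+\infty$. Then there exists a family $(\lambda_{\mathtt M})_{\mathtt M>0}$ of compactly supported measures in $\mathfrak Q$ (in particular with densities bounded by $(\beta\kappa)^{-1}$) such that $\lambda_{\mathtt M}\to\lambda$ weakly and $\tilde I(\lambda_{\mathtt M})\to\tilde I(\lambda)$ as $\mathtt M\to\infty$.
   Context: Fix $\eta,\theta>0$, $\gamma\in(0,1)$, $\beta>0$, $\xi\in(-\gamma^2,1]$; $\kappa=\gamma^2-|\xi|$, $\gamma^2$, $1-\xi$ according as $\xi\in(-\gamma^2,0]$, $(0,1-\gamma^2]$, $(1-\gamma^2,1]$. $\mathfrak Q$ is the set of probability measures $\lambda$ on $[\beta(\gamma^2-\kappa),+\infty)$ that are absolutely continuous with density $\le(\beta\kappa)^{-1}$. For $\lambda\in\mathfrak Q$ let $\mu$ be the push-forward of $\lambda$ under $x\mapsto e^{-x}$ and $\tilde I(\lambda)=I^{(\xi)}(\mu)$, where $I^{(\xi)}(\mu)=-H^{(\xi)}(\mu)-K^{(\xi)}(\mu)-M^{(\xi)}(\mu)$, $H^{(\xi)}(\mu)=\frac{\kappa^2}{2}\iint(\ln|x^\theta-y^\theta|+\ln|x^\eta-y^\eta|)d\mu d\mu$, and (i) $\xi\in(-\gamma^2,0]$: $K^{(\xi)}(\mu)=\kappa\int\int_{\gamma^2-1}^{|\xi|}\ln(1-x^\theta e^{\beta\theta u})du\,d\mu(x)$, $M^{(\xi)}(\mu)=\kappa\eta|\xi|\int\ln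 x\,d\mu$; (ii) $\xi\in(0,1-\gamma^2]$: $K^{(\xi)}(\mu)=\kappa\int\int_0^{1-\gamma^2-\xi}\ln(1-x^\theta e^{-\beta\theta u})du\,d\mu(x)$, $M^{(\xi)}(\mu)=\kappa\theta\xi\int\ln x\,d\mu$; (iii) $\xi\in(1-\gamma^2,1]$: $K^{(\xi)}(\mu)=\kappa\int\int_{1-\gamma^2-\xi}^{0}\ln(1-x^\eta e^{-\beta\eta u})du\,d\mu(x)$, $M^{(\xi)}(\mu)=\kappa\theta\xi\int\ln x\,d\mu$. *)

theory Defs
  imports "HOL-Probability.Probability"
begin

definition kappa :: "real \<Rightarrow> real \<Rightarrow> real" where
  "kappa \<gamma> \<xi> =
     (if \<xi> \<le> 0 then \<gamma>\<^sup>2 - \<bar>\<xi>\<bar>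
      else if \<xi> \<le> 1 - \<gamma>\<^sup>2 then \<gamma>\<^sup>2
      else 1 - \<xi>)"

text \<open>The class Q: probability measures on the reals, carried by
  [beta (gamma^2 - kappa), +infinity), absolutely continuous w.r.t. Lebesgue
  measure with a density f satisfying f <= (beta kappa)^(-1), written as
  beta kappa f <= 1 (so that kappa = 0 imposes no bound).\<close>
definition Qset :: "real \<Rightarrow> real \<Rightarrow> real \<Rightarrow> real measure set" where
  "Qset \<beta> \<gamma> \<xi> = {lam. prob_space lam \<and> sets lam = sets borel \<and>
      emeasure lam {..<\<beta> * (\<gamma>\<^sup>2 - kappa \<gamma> \<xi>)} = 0 \<and>
      (\<exists>f \<in> borel_measurable borel.
          (\<forall>x. 0 \<le> f x \<and> \<beta> * kappa \<gamma> \<xi> * f x \<le> 1) \<and>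
          lam = density lborel (\<lambda>x. ennreal (f x)))}"

text \<open>All logarithms appearing in I are of numbers in (0,1] (resp. 0) on the support,
  so -H, -K, -M are nonnegative and I takes values in [0,+infinity].\<close>
definition nlog :: "real \<Rightarrow> ennreal" where
  "nlog t = (if t \<le> 0 then \<infinity> else ennreal (- ln t))"

definition Hneg :: "real \<Rightarrow> real \<Rightarrow> real \<Rightarrow> real \<Rightarrow> real measure \<Rightarrow> ennreal" where
  "Hneg \<eta> \<theta> \<gamma> \<xi> \<mu> = ennreal ((kappa \<gamma> \<xi>)\<^sup>2 / 2) *
     (\<integral>\<^sup>+x. \<integral>\<^sup>+y. (nlog \<bar>x powr \<theta> - y powr \<theta>\<bar> + nlog \<bar>x powr \<eta> - y powr \<eta>\<bar>) \<partial>\<mu> \<partial>\<mu>)"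

definition Kneg :: "real \<Rightarrow> real \<Rightarrow> real \<Rightarrow> real \<Rightarrow> real \<Rightarrow> real measure \<Rightarrow> ennreal" where
  "Kneg \<eta> \<theta> \<beta> \<gamma> \<xi> \<mu> = ennreal (kappa \<gamma> \<xi>) *
     (if \<xi> \<le> 0 then
        (\<integral>\<^sup>+x. (\<integral>\<^sup>+u\<in>{\<gamma>\<^sup>2 - 1..\<bar>\<xi>\<bar>}. nlog (1 - x powr \<theta> * exp (\<beta> * \<theta> * u)) \<partial>lborel) \<partial>\<mu>)
      else if \<xi> \<le> 1 - \<gamma>\<^sup>2 then
        (\<integral>\<^sup>+x. (\<integral>\<^sup>+u\<in>{0..1 - \<gamma>\<^sup>2 - \<xi>}. nlog (1 - x powr \<theta> * exp (- \<beta> * \<theta> * u)) \<partial>lborel) \<partial>\<mu>)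
      else
        (\<integral>\<^sup>+x. (\<integral>\<^sup>+u\<in>{1 - \<gamma>\<^sup>2 - \<xi>..0}. nlog (1 - x powr \<eta> * exp (- \<beta> * \<eta> * u)) \<partial>lborel) \<partial>\<mu>))"

definition Mneg :: "real \<Rightarrow> real \<Rightarrow> real \<Rightarrow> real \<Rightarrow> real measure \<Rightarrow> ennreal" where
  "Mneg \<eta> \<theta> \<gamma> \<xi> \<mu> =
     (if \<xi> \<le> 0 then ennreal (kappa \<gamma> \<xi> * \<eta> * \<bar>\<xi>\<bar>)
      else ennreal (kappa \<gamma> \<xi> * \<theta> * \<xi>)) * (\<integral>\<^sup>+x. nlog x \<partial>\<mu>)"

definition Ixi :: "real \<Rightarrow> real \<Rightarrow> real \<Rightarrow> real \<Rightarrow> real \<Rightarrow> real measure \<Rightarrow> ennreal" where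
  "Ixi \<eta> \<theta> \<beta> \<gamma> \<xi> \<mu> = Hneg \<eta> \<theta> \<gamma> \<xi> \<mu> + Kneg \<eta> \<theta> \<beta> \<gamma> \<xi> \<mu> + Mneg \<eta> \<theta> \<gamma> \<xi> \<mu>"

definition Itilde :: "real \<Rightarrow> real \<Rightarrow> real \<Rightarrow> real \<Rightarrow> real \<Rightarrow> real measure \<Rightarrow> ennreal" where
  "Itilde \<eta> \<theta> \<beta> \<gamma> \<xi> lam = Ixi \<eta> \<theta> \<beta> \<gamma> \<xi> (distr lam borel (\<lambda>x. exp (- x)))"

definition compactly_supported :: "real measure \<Rightarrow> bool" where
  "compactly_supported lam \<longleftrightarrow> (\<exists>C. compact C \<and> emeasure lam (UNIV - C) = 0)"

definition weak_conv_filter :: "('i \<Rightarrow> real measure) \<Rightarrow> real measure \<Rightarrow> 'i filter \<Rightarrow> bool" where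
  "weak_conv_filter lams lam F \<longleftrightarrow>
     (\<forall>f :: real \<Rightarrow> real. continuous_on UNIV f \<and> bounded (range f) \<longrightarrow>
        ((\<lambda>i. \<integral>x. f x \<partial>lams i) \<longlongrightarrow> (\<integral>x. f x \<partial>lam)) F)"

end

theory Submission
  imports Defs
begin


lemma nlog_measurable[measurable]: "nlog \<in> borel_measurable borel"
  unfolding nlog_def by measurable

lemma nlog_antimono: "x \<le> y \<Longrightarrow> nlog y \<le> nlog x"
  unfolding nlog_def by (auto intro!: ennreal_leI)

lemma nlog_exp: "nlog (exp (- c)) = ennreal c"
  unfolding nlog_def by simp

lemma ennreal_add_le: assumes "0 \<le> b" shows "ennreal (a + b) \<le> ennreal a + ennreal b"
proof (cases "a \<ge> 0")
  case True then show ?thesis using assms by (simp add: ennreal_plus)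
next
  case False
  then have "ennreal (a + b) \<le> ennreal b" by (intro ennreal_leI) simp
  then show ?thesis by (simp add: add_increasing)
qed

lemma nlog_mult_exp: "0 \<le> x \<Longrightarrow> 0 \<le> c \<Longrightarrow> nlog (exp (- c) * x) \<le> nlog x + ennreal c"
proof (cases "x = 0")
  case False
  assume "0 \<le> x" "0 \<le> c"
  then have "x > 0" using False by simp
  then have "exp (- c) * x > 0" by simp
  then have "nlog (exp (- c) * x) = ennreal (- ln x + c)"
    unfolding nlog_def using \<open>x > 0\<close> \<open>exp (- c) * x > 0\<close> by (simp add: ln_mult not_le)
  also have "\<dots> \<le> ennreal (- ln x) + ennreal c" using \<open>0 \<le> c\<close> by (rule ennreal_add_le)
  also have "ennreal (- ln x) = nlog x" using \<open>x > 0\<close> unfolding nlog_def by simp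
  finally show ?thesis .
qed (simp add: nlog_def)

definition Phi :: "real \<Rightarrow> real \<Rightarrow> real \<Rightarrow> real \<Rightarrow> ennreal" where
  "Phi \<eta> \<theta> s t = nlog \<bar>exp (- s) powr \<theta> - exp (- t) powr \<theta>\<bar> + nlog \<bar>exp (- s) powr \<eta> - exp (- t) powr \<eta>\<bar>"

lemma Phi_measurable[measurable]: "(\<lambda>(s,t). Phi \<eta> \<theta> s t) \<in> borel_measurable (lborel \<Otimes>\<^sub>M lborel)"
  unfolding Phi_def by measurable

lemma Phi_sym: "Phi \<eta> \<theta> s t = Phi \<eta> \<theta> t s"
  unfolding Phi_def by (simp add: abs_minus_commute)

lemma nlog_part_lower:
  assumes "c > 0" shows "ennreal (c * min s t) \<le> nlog \<bar>exp (- s) powr c - exp (- t) powr c\<bar>"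
proof -
  have "\<bar>exp (- s) powr c - exp (- t) powr c\<bar> \<le> exp (- (c * min s t))"
    using assms by (auto simp: exp_powr_real min_def abs_if mult.commute)
  then have "nlog (exp (- (c * min s t))) \<le> nlog \<bar>exp (- s) powr c - exp (- t) powr c\<bar>"
    by (rule nlog_antimono)
  then show ?thesis by (simp add: nlog_exp)
qed

lemma Phi_lower:
  assumes "\<theta> > 0" shows "ennreal (\<theta> * min s t) \<le> Phi \<eta> \<theta> s t"
  unfolding Phi_def using nlog_part_lower[OF assms, of s t]
  by (meson add_increasing2 zero_le)

lemma nlog_part_sep:
  assumes "c > 0" "s + 1 \<le> t" "0 \<le> s"
  shows "nlog \<bar>exp (- s) powr c - exp (- t) powr c\<bar> \<le> ennreal (c * s - ln (1 - exp (- c)))"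
proof -
  have e1: "exp (- c) < 1" using assms by simp
  have "(- t) * c \<le> (-(s+1)) * c" using assms by (intro mult_right_mono) auto
  then have "exp (- t * c) \<le> exp (- (s+1) * c)" by simp
  also have "exp (- (s+1) * c) = exp (- s * c) * exp (- c)" by (simp add: algebra_simps exp_add[symmetric])
  finally have "exp (- s * c) * (1 - exp (- c)) \<le> \<bar>exp (- s) powr c - exp (- t) powr c\<bar>"
    by (simp add: exp_powr_real algebra_simps)
  then have "nlog \<bar>exp (- s) powr c - exp (- t) powr c\<bar> \<le> nlog (exp (- s * c) * (1 - exp (- c)))"
    by (rule nlog_antimono)
  also have "\<dots> = ennreal (c * s - ln (1 - exp (- c)))"
  proof -
    have pos: "exp (- s * c) * (1 - exp (- c)) > 0" using e1 by simp
    then have "\<not> exp (- s * c) * (1 - exp (- c)) \<le> 0" by simp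
    then show ?thesis using pos e1 unfolding nlog_def by (simp add: ln_mult mult.commute del: exp_minus)
  qed
  finally show ?thesis .
qed

definition C0 :: "real \<Rightarrow> real \<Rightarrow> real" where
  "C0 \<eta> \<theta> = - ln (1 - exp (- \<theta>)) - ln (1 - exp (- \<eta>))"

lemma C0_nonneg: "\<theta> > 0 \<Longrightarrow> \<eta> > 0 \<Longrightarrow> 0 \<le> C0 \<eta> \<theta>"
proof -
  assume a: "\<theta> > 0" "\<eta> > 0"
  have "ln (1 - exp (- \<theta>)) \<le> 0" "ln (1 - exp (- \<eta>)) \<le> 0" using a by auto
  then show ?thesis unfolding C0_def by simp
qed

lemma Phi_sep:
  assumes "\<theta> > 0" "\<eta> > 0" "s + 1 \<le> t" "0 \<le> s"
  shows "Phi \<eta> \<theta> s t \<le> ennreal ((\<theta> + \<eta>) * s + C0 \<eta> \<theta>)"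
proof -
  have l1: "0 \<le> - ln (1 - exp (- \<theta>))" "0 \<le> - ln (1 - exp (- \<eta>))" using assms by auto
  have l3: "0 \<le> \<theta> * s" "0 \<le> \<eta> * s" using assms by simp_all
  have l2: "0 \<le> \<theta> * s - ln (1 - exp (- \<theta>))" "0 \<le> \<eta> * s - ln (1 - exp (- \<eta>))" using l3 l1 by linarith+
  have "Phi \<eta> \<theta> s t \<le> ennreal (\<theta> * s - ln (1 - exp (- \<theta>))) + ennreal (\<eta> * s - ln (1 - exp (- \<eta>)))"
    unfolding Phi_def by (intro add_mono nlog_part_sep assms)
  also have "\<dots> = ennreal ((\<theta> + \<eta>) * s + C0 \<eta> \<theta>)"
    using l2 by (subst ennreal_plus[symmetric]) (auto simp: C0_def algebra_simps)
  finally show ?thesis .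
qed

lemma Phi_shift:
  assumes "\<theta> > 0" "\<eta> > 0" "0 \<le> d"
  shows "Phi \<eta> \<theta> (s + d) (t + d) \<le> Phi \<eta> \<theta> s t + ennreal ((\<theta> + \<eta>) * d)"
proof -
  have eq: "\<bar>exp (- (s + d)) powr c - exp (- (t + d)) powr c\<bar> = exp (- (c * d)) * \<bar>exp (- s) powr c - exp (- t) powr c\<bar>" for c
  proof -
    have "exp (- (x + d)) powr c = exp (- (c * d)) * exp (- x) powr c" for x
      unfolding exp_powr_real by (simp add: algebra_simps) (subst exp_add[symmetric], simp)
    then show ?thesis by (simp add: abs_mult right_diff_distrib[symmetric] del: exp_minus)
  qed
  have "Phi \<eta> \<theta> (s + d) (t + d) \<le> (nlog \<bar>exp (- s) powr \<theta> - exp (- t) powr \<theta>\<bar> + ennreal (\<theta> * d))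
       + (nlog \<bar>exp (- s) powr \<eta> - exp (- t) powr \<eta>\<bar> + ennreal (\<eta> * d))"
    unfolding Phi_def eq using assms by (intro add_mono nlog_mult_exp) auto
  also have "\<dots> = Phi \<eta> \<theta> s t + ennreal ((\<theta> + \<eta>) * d)"
    unfolding Phi_def using assms by (simp add: ennreal_plus[symmetric] algebra_simps del: ennreal_plus)
  finally show ?thesis .
qed

lemma nn_translate:
  fixes F :: "real \<Rightarrow> ennreal"
  assumes "F \<in> borel_measurable borel"
  shows "(\<integral>\<^sup>+x. F x \<partial>lborel) = (\<integral>\<^sup>+u. F (u + d) \<partial>lborel)"
  using nn_integral_real_affine[OF assms, of 1 d] by (simp add: add.commute)

lemma nn_distr_dens:
  fixes g :: "real \<Rightarrow> real" and h :: "real \<Rightarrow> ennreal"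
  assumes g: "g \<in> borel_measurable borel" and h: "h \<in> borel_measurable borel"
  shows "(\<integral>\<^sup>+x. h x \<partial>distr (density lborel (\<lambda>x. ennreal (g x))) borel (\<lambda>x. exp (- x)))
       = (\<integral>\<^sup>+s. ennreal (g s) * h (exp (- s)) \<partial>lborel)"
proof -
  have m: "(\<lambda>x::real. exp (- x)) \<in> density lborel (\<lambda>x. ennreal (g x)) \<rightarrow>\<^sub>M borel"
    by (subst measurable_cong_sets[OF sets_density refl], subst measurable_cong_sets[OF sets_lborel refl]) measurable
  have "(\<integral>\<^sup>+x. h x \<partial>distr (density lborel (\<lambda>x. ennreal (g x))) borel (\<lambda>x. exp (- x)))
     = (\<integral>\<^sup>+x. h (exp (- x)) \<partial>density lborel (\<lambda>x. ennreal (g x)))"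
    by (rule nn_integral_distr[OF m]) (simp add: h)
  also have "\<dots> = (\<integral>\<^sup>+s. ennreal (g s) * h (exp (- s)) \<partial>lborel)"
    using g h by (subst nn_integral_density) auto
  finally show ?thesis .
qed

lemma mono_tendsto_SUP:
  fixes Z :: "real \<Rightarrow> ennreal"
  assumes mono: "\<And>M N. M \<le> N \<Longrightarrow> Z M \<le> Z N"
    and sup: "(SUP n::nat. Z (real n)) = L"
  shows "(Z \<longlongrightarrow> L) at_top"
proof (rule order_tendstoI)
  fix l assume "l < L"
  then obtain n :: nat where "l < Z (real n)" unfolding sup[symmetric] by (auto simp: less_SUP_iff)
  then show "eventually (\<lambda>M. l < Z M) at_top"
    unfolding eventually_at_top_linorder
    by (intro exI[of _ "real n"] allI impI) (erule less_le_trans[OF _ mono])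
next
  fix u assume "L < u"
  have Zle: "Z M \<le> L" for M
  proof -
    obtain n :: nat where "M \<le> real n" using real_arch_simple by blast
    then have "Z M \<le> Z (real n)" by (rule mono)
    also have "\<dots> \<le> L" unfolding sup[symmetric] by (rule SUP_upper) simp
    finally show ?thesis .
  qed
  show "eventually (\<lambda>M. Z M < u) at_top" using \<open>L < u\<close> by (intro always_eventually allI le_less_trans[OF Zle])
qed

lemma antimono_tendsto_INF:
  fixes Z :: "real \<Rightarrow> ennreal"
  assumes mono: "\<And>M N. M \<le> N \<Longrightarrow> Z N \<le> Z M"
    and inf: "(INF n::nat. Z (real n)) = 0"
  shows "(Z \<longlongrightarrow> 0) at_top"
proof (rule order_tendstoI)
  fix l :: ennreal assume "l < 0" then show "eventually (\<lambda>M. l < Z M) at_top" by simp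
next
  fix u :: ennreal assume "0 < u"
  then obtain n :: nat where "Z (real n) < u" unfolding inf[symmetric] by (auto simp: INF_less_iff)
  then show "eventually (\<lambda>M. Z M < u) at_top"
    unfolding eventually_at_top_linorder
    by (intro exI[of _ "real n"] allI impI) (erule le_less_trans[OF mono])
qed

lemma tendsto_max_const:
  fixes Z :: "real \<Rightarrow> 'a::topological_space"
  assumes "(Z \<longlongrightarrow> l) at_top"
  shows "((\<lambda>M. Z (max M K)) \<longlongrightarrow> l) at_top"
proof -
  have "filterlim (\<lambda>M::real. max M K) at_top at_top"
    by (rule filterlim_at_top_mono[OF filterlim_ident]) auto
  then show ?thesis by (rule filterlim_compose[OF assms])
qed

lemma INF_indicator_zero:
  fixes c :: ennreal
  shows "(INF n::nat. c * indicator {real n<..} (t::real)) = 0"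
proof -
  obtain n :: nat where "t \<le> real n" using real_arch_simple by blast
  then have "(INF n::nat. c * indicator {real n<..} t) \<le> c * indicator {real n<..} t"
    by (intro INF_lower) simp
  also have "\<dots> = 0" using \<open>t \<le> real n\<close> by (simp add: indicator_def)
  finally show ?thesis by simp
qed

lemma tail2:
  fixes H :: "real \<Rightarrow> real \<Rightarrow> ennreal"
  assumes meas: "(\<lambda>(s,t). H s t) \<in> borel_measurable (lborel \<Otimes>\<^sub>M lborel)"
    and fin: "(\<integral>\<^sup>+s. (\<integral>\<^sup>+t. H s t \<partial>lborel) \<partial>lborel) < \<infinity>"
  shows "((\<lambda>M. \<integral>\<^sup>+s. (\<integral>\<^sup>+t. H s t * indicator {M<..} t \<partial>lborel) \<partial>lborel) \<longlongrightarrow> 0) at_top"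
proof (rule antimono_tendsto_INF)
  note [measurable] = meas
  fix M N :: real assume "M \<le> N"
  then show "(\<integral>\<^sup>+s. (\<integral>\<^sup>+t. H s t * indicator {N<..} t \<partial>lborel) \<partial>lborel)
     \<le> (\<integral>\<^sup>+s. (\<integral>\<^sup>+t. H s t * indicator {M<..} t \<partial>lborel) \<partial>lborel)"
    by (intro nn_integral_mono mult_left_mono) (auto simp: indicator_def)
next
  note [measurable] = meas
  define Fn where "Fn n s = (\<integral>\<^sup>+t. H s t * indicator {real n<..} t \<partial>lborel)" for n :: nat and s
  have Fm[measurable]: "Fn n \<in> borel_measurable lborel" for n
    unfolding Fn_def by measurable
  have Hm[measurable]: "(\<lambda>s. \<integral>\<^sup>+t. H s t \<partial>lborel) \<in> borel_measurable lborel"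
    by measurable
  have ae: "AE s in lborel. (\<integral>\<^sup>+t. H s t \<partial>lborel) \<noteq> \<infinity>"
    using fin by (intro nn_integral_PInf_AE) auto
  have Fle: "Fn n s \<le> (\<integral>\<^sup>+t. H s t \<partial>lborel)" for n s
    unfolding Fn_def by (intro nn_integral_mono) (auto simp: indicator_def)
  have dec: "Fn (Suc n) s \<le> Fn n s" for n s
    unfolding Fn_def by (intro nn_integral_mono mult_left_mono) (auto simp: indicator_def)
  have inner: "(INF n. Fn n s) = 0" if "(\<integral>\<^sup>+t. H s t \<partial>lborel) \<noteq> \<infinity>" for s
  proof -
    have "(INF n. Fn n s) = (\<integral>\<^sup>+t. (INF n::nat. H s t * indicator {real n<..} t) \<partial>lborel)"
      unfolding Fn_def
    proof (rule nn_integral_monotone_convergence_INF_AE[symmetric, where i=0])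
      show "\<And>i. AE x in lborel. H s x * indicator {real (Suc i)<..} x \<le> H s x * indicator {real i<..} x"
        by (auto intro!: mult_left_mono simp: indicator_def)
      show "\<And>i. (\<lambda>x. H s x * indicator {real i<..} x) \<in> borel_measurable lborel" by measurable
      show "(\<integral>\<^sup>+x. H s x * indicator {real 0<..} x \<partial>lborel) < \<infinity>"
        using Fle[of 0 s] that unfolding Fn_def by (simp add: less_top)
    qed
    also have "\<dots> = 0" by (simp add: INF_indicator_zero)
    finally show ?thesis .
  qed
  have "(INF n. \<integral>\<^sup>+s. Fn n s \<partial>lborel) = (\<integral>\<^sup>+s. (INF n. Fn n s) \<partial>lborel)"
  proof (rule nn_integral_monotone_convergence_INF_AE[symmetric, where i=0])
    show "\<And>i. AE x in lborel. Fn (Suc i) x \<le> Fn i x" using dec by auto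
    show "\<And>i. Fn i \<in> borel_measurable lborel" by measurable
    have "(\<integral>\<^sup>+s. Fn 0 s \<partial>lborel) \<le> (\<integral>\<^sup>+s. (\<integral>\<^sup>+t. H s t \<partial>lborel) \<partial>lborel)"
      by (intro nn_integral_mono Fle)
    then show "(\<integral>\<^sup>+s. Fn 0 s \<partial>lborel) < \<infinity>" using fin by (rule le_less_trans)
  qed
  also have "\<dots> = (\<integral>\<^sup>+(s::real). 0 \<partial>lborel)"
    by (rule nn_integral_cong_AE) (use ae in \<open>auto simp: inner\<close>)
  finally show "(INF n::nat. \<integral>\<^sup>+s. (\<integral>\<^sup>+t. H s t * indicator {real n<..} t \<partial>lborel) \<partial>lborel) = 0"
    unfolding Fn_def by simp
qed

lemma tail1:
  fixes h :: "real \<Rightarrow> ennreal"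
  assumes meas[measurable]: "h \<in> borel_measurable lborel"
    and fin: "(\<integral>\<^sup>+t. h t \<partial>lborel) < \<infinity>"
  shows "((\<lambda>M. \<integral>\<^sup>+t. h t * indicator {M<..} t \<partial>lborel) \<longlongrightarrow> 0) at_top"
proof (rule antimono_tendsto_INF)
  fix M N :: real assume "M \<le> N"
  then show "(\<integral>\<^sup>+t. h t * indicator {N<..} t \<partial>lborel) \<le> (\<integral>\<^sup>+t. h t * indicator {M<..} t \<partial>lborel)"
    by (intro nn_integral_mono mult_left_mono) (auto simp: indicator_def)
next
  have "(INF n::nat. \<integral>\<^sup>+t. h t * indicator {real n<..} t \<partial>lborel) = (\<integral>\<^sup>+t. (INF n::nat. h t * indicator {real n<..} t) \<partial>lborel)"
  proof (rule nn_integral_monotone_convergence_INF_AE[symmetric, where i=0])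
    show "\<And>i. AE x in lborel. h x * indicator {real (Suc i)<..} x \<le> h x * indicator {real i<..} x"
      by (auto intro!: mult_left_mono simp: indicator_def)
    show "\<And>i. (\<lambda>x. h x * indicator {real i<..} x) \<in> borel_measurable lborel" by measurable
    have "(\<integral>\<^sup>+x. h x * indicator {real 0<..} x \<partial>lborel) \<le> (\<integral>\<^sup>+t. h t \<partial>lborel)"
      by (intro nn_integral_mono) (auto simp: indicator_def)
    then show "(\<integral>\<^sup>+x. h x * indicator {real 0<..} x \<partial>lborel) < \<infinity>" using fin by (rule le_less_trans)
  qed
  also have "\<dots> = 0" by (simp add: INF_indicator_zero)
  finally show "(INF n::nat. \<integral>\<^sup>+t. h t * indicator {real n<..} t \<partial>lborel) = 0" .
qed

lemma SUP_incseq_ev_const: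
  fixes x :: "nat \<Rightarrow> 'a::complete_lattice"
  assumes "incseq x" "\<And>n. n \<ge> N \<Longrightarrow> x n = c"
  shows "(SUP n. x n) = c"
proof (rule antisym)
  show "(SUP n. x n) \<le> c"
  proof (rule SUP_least)
    fix n
    have "x n \<le> x (max n N)" using assms(1) by (simp add: incseq_def)
    then show "x n \<le> c" using assms(2)[of "max n N"] by simp
  qed
  show "c \<le> (SUP n. x n)" using assms(2)[of N] by (metis SUP_upper UNIV_I order_refl)
qed

lemma ind_ev: "\<exists>N::nat. \<forall>n\<ge>N. indicator {..real n} (s::real) = (1::'a::zero_neq_one)"
proof -
  obtain N :: nat where "s \<le> real N" using real_arch_simple by blast
  then show ?thesis by (auto intro!: exI[of _ N] simp: indicator_def)
qed

lemma mono1: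
  fixes f :: "real \<Rightarrow> real" and w :: "real \<Rightarrow> ennreal"
  assumes [measurable]: "f \<in> borel_measurable borel" "w \<in> borel_measurable borel"
    and f0: "\<And>x. 0 \<le> f x"
  shows "((\<lambda>M. \<integral>\<^sup>+s. ennreal (f s * indicator {..M} s) * w s \<partial>lborel) \<longlongrightarrow> (\<integral>\<^sup>+s. ennreal (f s) * w s \<partial>lborel)) at_top"
proof (rule mono_tendsto_SUP)
  fix M N :: real assume "M \<le> N"
  then show "(\<integral>\<^sup>+s. ennreal (f s * indicator {..M} s) * w s \<partial>lborel) \<le> (\<integral>\<^sup>+s. ennreal (f s * indicator {..N} s) * w s \<partial>lborel)"
    using f0 by (intro nn_integral_mono mult_right_mono ennreal_leI) (auto simp: indicator_def)
next
  have eq: "(\<lambda>s. ennreal (f s * indicator {..M} s) * w s) = (\<lambda>s. ennreal (f s) * w s * indicator {..M} s)" for M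
    by (auto simp: indicator_def fun_eq_iff)
  have "(SUP n::nat. \<integral>\<^sup>+s. ennreal (f s) * w s * indicator {..real n} s \<partial>lborel)
      = (\<integral>\<^sup>+s. (SUP n::nat. ennreal (f s) * w s * indicator {..real n} s) \<partial>lborel)"
    by (rule nn_integral_monotone_convergence_SUP[symmetric])
       (auto simp: incseq_def le_fun_def indicator_def intro!: mult_left_mono)
  also have "\<dots> = (\<integral>\<^sup>+s. ennreal (f s) * w s \<partial>lborel)"
  proof (intro nn_integral_cong)
    fix s :: real
    obtain N :: nat where N: "\<forall>n\<ge>N. indicator {..real n} s = (1::ennreal)" using ind_ev by blast
    show "(SUP n::nat. ennreal (f s) * w s * indicator {..real n} s) = ennreal (f s) * w s"
    proof (rule SUP_incseq_ev_const[of _ N])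
      show "incseq (\<lambda>n. ennreal (f s) * w s * indicator {..real n} s)"
        by (auto simp: incseq_def indicator_def intro!: mult_left_mono)
    qed (use N in simp)
  qed
  finally show "(SUP n::nat. \<integral>\<^sup>+s. ennreal (f s * indicator {..real n} s) * w s \<partial>lborel) = (\<integral>\<^sup>+s. ennreal (f s) * w s \<partial>lborel)"
    unfolding eq .
qed

lemma mono2:
  fixes f :: "real \<Rightarrow> real" and W :: "real \<Rightarrow> real \<Rightarrow> ennreal"
  assumes [measurable]: "f \<in> borel_measurable borel" "(\<lambda>(s,t). W s t) \<in> borel_measurable (lborel \<Otimes>\<^sub>M lborel)"
    and f0: "\<And>x. 0 \<le> f x"
  shows "((\<lambda>M. \<integral>\<^sup>+s. ennreal (f s * indicator {..M} s) * (\<integral>\<^sup>+t. ennreal (f t * indicator {..M} t) * W s t \<partial>lborel) \<partial>lborel)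
     \<longlongrightarrow> (\<integral>\<^sup>+s. ennreal (f s) * (\<integral>\<^sup>+t. ennreal (f t) * W s t \<partial>lborel) \<partial>lborel)) at_top"
proof -
  define F where "F n s t = ennreal (f s) * ennreal (f t) * W s t * (indicator {..n} s * indicator {..n} t)" for n :: real and s t
  have [measurable]: "(\<lambda>(s,t). F n s t) \<in> borel_measurable (lborel \<Otimes>\<^sub>M lborel)" for n
    unfolding F_def by measurable
  have eq: "(\<integral>\<^sup>+s. ennreal (f s * indicator {..M} s) * (\<integral>\<^sup>+t. ennreal (f t * indicator {..M} t) * W s t \<partial>lborel) \<partial>lborel)
      = (\<integral>\<^sup>+s. (\<integral>\<^sup>+t. F M s t \<partial>lborel) \<partial>lborel)" for M
    unfolding F_def
    by (subst nn_integral_cmult[symmetric], simp, intro nn_integral_cong)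
       (auto simp: indicator_def mult.assoc)
  have eq2: "(\<integral>\<^sup>+s. ennreal (f s) * (\<integral>\<^sup>+t. ennreal (f t) * W s t \<partial>lborel) \<partial>lborel)
      = (\<integral>\<^sup>+s. (\<integral>\<^sup>+t. ennreal (f s) * ennreal (f t) * W s t \<partial>lborel) \<partial>lborel)"
    by (subst nn_integral_cmult[symmetric], simp) (simp add: mult.assoc)
  have Fmono: "F M s t \<le> F N s t" if "M \<le> N" for M N s t
    using that unfolding F_def by (intro mult_left_mono) (auto simp: indicator_def)
  have Fsup: "(SUP n::nat. F (real n) s t) = ennreal (f s) * ennreal (f t) * W s t" for s t
  proof -
    obtain N1 :: nat where N1: "\<forall>n\<ge>N1. indicator {..real n} s = (1::ennreal)" using ind_ev by blast
    obtain N2 :: nat where N2: "\<forall>n\<ge>N2. indicator {..real n} t = (1::ennreal)" using ind_ev by blast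
    show ?thesis
    proof (rule SUP_incseq_ev_const[of _ "max N1 N2"])
      show "incseq (\<lambda>n. F (real n) s t)" by (auto simp: incseq_def intro!: Fmono)
    qed (use N1 N2 in \<open>simp add: F_def\<close>)
  qed
  show ?thesis unfolding eq eq2
  proof (rule mono_tendsto_SUP)
    fix M N :: real assume "M \<le> N"
    then show "(\<integral>\<^sup>+s. (\<integral>\<^sup>+t. F M s t \<partial>lborel) \<partial>lborel) \<le> (\<integral>\<^sup>+s. (\<integral>\<^sup>+t. F N s t \<partial>lborel) \<partial>lborel)"
      by (intro nn_integral_mono Fmono)
  next
    have "(SUP n::nat. \<integral>\<^sup>+s. (\<integral>\<^sup>+t. F (real n) s t \<partial>lborel) \<partial>lborel)
        = (\<integral>\<^sup>+s. (SUP n::nat. \<integral>\<^sup>+t. F (real n) s t \<partial>lborel) \<partial>lborel)"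
      by (rule nn_integral_monotone_convergence_SUP[symmetric])
         (auto simp: incseq_def le_fun_def intro!: nn_integral_mono Fmono)
    also have "\<dots> = (\<integral>\<^sup>+s. (\<integral>\<^sup>+t. (SUP n::nat. F (real n) s t) \<partial>lborel) \<partial>lborel)"
      by (intro nn_integral_cong nn_integral_monotone_convergence_SUP[symmetric])
         (auto simp: incseq_def le_fun_def intro!: Fmono)
    finally show "(SUP n::nat. \<integral>\<^sup>+s. (\<integral>\<^sup>+t. F (real n) s t \<partial>lborel) \<partial>lborel)
        = (\<integral>\<^sup>+s. (\<integral>\<^sup>+t. ennreal (f s) * ennreal (f t) * W s t \<partial>lborel) \<partial>lborel)"
      by (simp add: Fsup)
  qed
qed


definition XX :: "real \<Rightarrow> real \<Rightarrow> (real \<Rightarrow> real) \<Rightarrow> (real \<Rightarrow> real) \<Rightarrow> ennreal" where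
  "XX \<eta> \<theta> a b = (\<integral>\<^sup>+s. ennreal (a s) * (\<integral>\<^sup>+t. ennreal (b t) * Phi \<eta> \<theta> s t \<partial>lborel) \<partial>lborel)"

lemma inner_meas[measurable]:
  assumes [measurable]: "c \<in> borel_measurable borel"
  shows "(\<lambda>s. \<integral>\<^sup>+t. ennreal (c t) * Phi \<eta> \<theta> s t \<partial>lborel) \<in> borel_measurable borel"
proof -
  have "(\<lambda>s. \<integral>\<^sup>+t. ennreal (c t) * Phi \<eta> \<theta> s t \<partial>lborel) \<in> borel_measurable lborel"
    by measurable
  then show ?thesis by simp
qed

lemma XX_add:
  assumes [measurable]: "a \<in> borel_measurable borel" "b \<in> borel_measurable borel"
      "c \<in> borel_measurable borel" "d \<in> borel_measurable borel"
    and nn: "\<And>x. 0 \<le> a x" "\<And>x. 0 \<le> b x" "\<And>x. 0 \<le> c x" "\<And>x. 0 \<le> d x"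
  shows "XX \<eta> \<theta> (\<lambda>x. a x + b x) (\<lambda>x. c x + d x) = XX \<eta> \<theta> a c + XX \<eta> \<theta> a d + XX \<eta> \<theta> b c + XX \<eta> \<theta> b d"
proof -
  define I where "I h s = (\<integral>\<^sup>+t. ennreal (h t) * Phi \<eta> \<theta> s t \<partial>lborel)" for h :: "real \<Rightarrow> real" and s
  have Im[measurable]: "I h \<in> borel_measurable borel" if "h \<in> borel_measurable borel" for h
    unfolding I_def using that by measurable
  have [measurable]: "I c \<in> borel_measurable borel" "I d \<in> borel_measurable borel" by (simp_all add: Im)
  have [measurable]: "I c \<in> borel_measurable lborel" "I d \<in> borel_measurable lborel" by (simp_all add: Im)
  have inner: "I (\<lambda>x. c x + d x) s = I c s + I d s" for s
  proof -
    have "I (\<lambda>x. c x + d x) s = (\<integral>\<^sup>+t. ennreal (c t) * Phi \<eta> \<theta> s t + ennreal (d t) * Phi \<eta> \<theta> s t \<partial>lborel)"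
      unfolding I_def using nn by (intro nn_integral_cong) (simp add: distrib_right)
    also have "\<dots> = I c s + I d s" unfolding I_def by (rule nn_integral_add) measurable
    finally show ?thesis .
  qed
  have "XX \<eta> \<theta> (\<lambda>x. a x + b x) (\<lambda>x. c x + d x) = (\<integral>\<^sup>+s. ennreal (a s + b s) * I (\<lambda>x. c x + d x) s \<partial>lborel)"
    unfolding XX_def I_def ..
  also have "\<dots> = (\<integral>\<^sup>+s. (ennreal (a s) * I c s + ennreal (a s) * I d s) + (ennreal (b s) * I c s + ennreal (b s) * I d s) \<partial>lborel)"
    using nn by (intro nn_integral_cong) (simp add: inner distrib_right distrib_left)
  also have "\<dots> = (\<integral>\<^sup>+s. ennreal (a s) * I c s + ennreal (a s) * I d s \<partial>lborel) + (\<integral>\<^sup>+s. ennreal (b s) * I c s + ennreal (b s) * I d s \<partial>lborel)"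
    by (rule nn_integral_add) measurable
  also have "\<dots> = XX \<eta> \<theta> a c + XX \<eta> \<theta> a d + XX \<eta> \<theta> b c + XX \<eta> \<theta> b d"
    unfolding XX_def I_def[symmetric]
    apply (subst (1 2) nn_integral_add)
    by measurable
  finally show ?thesis .
qed

locale constr =
  fixes f :: "real \<Rightarrow> real" and K :: real
  assumes f_meas[measurable]: "f \<in> borel_measurable borel"
    and f_nonneg: "\<And>x. 0 \<le> f x"
    and f_neg: "\<And>x. x < 0 \<Longrightarrow> f x = 0"
    and f_int: "(\<integral>\<^sup>+x. ennreal (f x) \<partial>lborel) = 1"
    and K_ge: "1 \<le> K"
    and P_ge: "1/2 \<le> (\<integral>\<^sup>+x. ennreal (f x * indicator {..K} x) \<partial>lborel)"
begin

definition "Mp M = max M K"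
definition "T M = (\<integral>\<^sup>+x. ennreal (f x * indicator {Mp M<..} x) \<partial>lborel)"
definition "P = (\<integral>\<^sup>+x. ennreal (f x * indicator {..K} x) \<partial>lborel)"
definition "r M = enn2real (T M) / enn2real P"
definition "A M x = f x * indicator {..Mp M} x"
definition "B M x = r M * (f (x - (Mp M + 1)) * indicator {..K} (x - (Mp M + 1)))"
definition "g M x = A M x + B M x"

lemma A_meas[measurable]: "A M \<in> borel_measurable borel"
  unfolding A_def by measurable
lemma B_meas[measurable]: "B M \<in> borel_measurable borel"
  unfolding B_def by measurable
lemma g_meas[measurable]: "g M \<in> borel_measurable borel"
  unfolding g_def by measurable

lemma split_int:
  "(\<integral>\<^sup>+x. ennreal (f x * indicator {..c} x) \<partial>lborel) + (\<integral>\<^sup>+x. ennreal (f x * indicator {c<..} x) \<partial>lborel) = 1"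
proof -
  have "(\<integral>\<^sup>+x. ennreal (f x * indicator {..c} x) \<partial>lborel) + (\<integral>\<^sup>+x. ennreal (f x * indicator {c<..} x) \<partial>lborel)
    = (\<integral>\<^sup>+x. ennreal (f x * indicator {..c} x) + ennreal (f x * indicator {c<..} x) \<partial>lborel)"
    by (rule nn_integral_add[symmetric]) auto
  also have "\<dots> = (\<integral>\<^sup>+x. ennreal (f x) \<partial>lborel)"
    by (intro nn_integral_cong) (auto simp: indicator_def)
  finally show ?thesis using f_int by simp
qed

lemma Mp_ge: "K \<le> Mp M" "M \<le> Mp M" "1 \<le> Mp M"
  using K_ge by (auto simp: Mp_def)

lemma T_le: "T M \<le> (\<integral>\<^sup>+x. ennreal (f x * indicator {K<..} x) \<partial>lborel)"
  unfolding T_def using Mp_ge(1)[of M] f_nonneg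
  by (intro nn_integral_mono ennreal_leI) (auto simp: indicator_def)

lemma T_P: "T M + P \<le> 1"
proof -
  have "T M + P \<le> (\<integral>\<^sup>+x. ennreal (f x * indicator {K<..} x) \<partial>lborel) + P"
    by (rule add_right_mono[OF T_le])
  also have "\<dots> = 1" using split_int[of K] unfolding P_def by (simp add: add.commute)
  finally show ?thesis .
qed

lemma P_le: "P \<le> 1"
proof -
  have "P \<le> T 0 + P" by (simp add: add_increasing)
  then show ?thesis using T_P[of 0] by (rule order_trans)
qed

lemma T_le1: "T M \<le> 1"
proof -
  have "T M \<le> T M + P" by (simp add: add_increasing2)
  then show ?thesis using T_P[of M] by (rule order_trans)
qed

lemma T_eq: "T M = ennreal (enn2real (T M))"
  using T_le1[of M] by (simp add: ennreal_enn2real le_less_trans[OF _ ennreal_one_less_top])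
lemma P_eq: "P = ennreal (enn2real P)"
  using P_le by (simp add: ennreal_enn2real le_less_trans[OF _ ennreal_one_less_top])

lemma real_TP: "enn2real (T M) + enn2real P \<le> 1" "1/2 \<le> enn2real P" "0 \<le> enn2real (T M)"
proof -
  have "ennreal (enn2real (T M) + enn2real P) = T M + P"
    by (subst ennreal_plus) (auto simp: T_eq[symmetric] P_eq[symmetric])
  then show "enn2real (T M) + enn2real P \<le> 1" using T_P[of M]
    by (metis ennreal_le_1)
  have h: "(1/2::ennreal) = ennreal (1/2)" using divide_ennreal[of 1 2] by simp
  have "ennreal (1/2) \<le> ennreal (enn2real P)" using P_ge unfolding P_def[symmetric] h
    by (subst P_eq[symmetric])
  then show "1/2 \<le> enn2real P" by (metis ennreal_le_iff enn2real_nonneg)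
qed simp

lemma r_props: "0 \<le> r M" "r M \<le> 1" "enn2real P > 0"
  using real_TP(1)[of M] real_TP(2) real_TP(3)[of M] by (auto simp: r_def divide_le_eq_1)

lemma rP: "ennreal (r M) * P = T M"
proof -
  have "r M * enn2real P = enn2real (T M)" using r_props(3) by (simp add: r_def)
  then have "ennreal (r M) * ennreal (enn2real P) = ennreal (enn2real (T M))"
    using r_props(1)[of M] r_props(3) by (simp add: ennreal_mult[symmetric])
  then show ?thesis using T_eq P_eq by metis
qed

lemma A_nonneg: "0 \<le> A M x" and B_nonneg: "0 \<le> B M x" and g_nonneg: "0 \<le> g M x"
  using f_nonneg r_props(1)[of M] by (auto simp: A_def B_def g_def)

lemma A_supp: "A M x \<noteq> 0 \<Longrightarrow> 0 \<le> x \<and> x \<le> Mp M"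
  using f_neg[of x] by (cases "x < 0") (auto simp: A_def indicator_def)

lemma B_supp: "B M x \<noteq> 0 \<Longrightarrow> Mp M + 1 \<le> x \<and> x \<le> Mp M + 1 + K"
  using f_neg[of "x - (Mp M + 1)"] by (cases "x - (Mp M + 1) < 0") (auto simp: B_def indicator_def)

lemma B_int:
  fixes w :: "real \<Rightarrow> ennreal"
  assumes [measurable]: "w \<in> borel_measurable borel"
  shows "(\<integral>\<^sup>+x. ennreal (B M x) * w x \<partial>lborel)
     = ennreal (r M) * (\<integral>\<^sup>+u. ennreal (f u * indicator {..K} u) * w (u + (Mp M + 1)) \<partial>lborel)"
proof -
  have "(\<integral>\<^sup>+x. ennreal (B M x) * w x \<partial>lborel) = (\<integral>\<^sup>+u. ennreal (B M (u + (Mp M + 1))) * w (u + (Mp M + 1)) \<partial>lborel)"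
    by (rule nn_translate) measurable
  also have "\<dots> = (\<integral>\<^sup>+u. ennreal (r M) * (ennreal (f u * indicator {..K} u) * w (u + (Mp M + 1))) \<partial>lborel)"
    using r_props(1)[of M] f_nonneg
    by (intro nn_integral_cong) (simp add: B_def ennreal_mult mult.assoc)
  also have "\<dots> = ennreal (r M) * (\<integral>\<^sup>+u. ennreal (f u * indicator {..K} u) * w (u + (Mp M + 1)) \<partial>lborel)"
    by (rule nn_integral_cmult) measurable
  finally show ?thesis .
qed

lemma B_mass: "(\<integral>\<^sup>+x. ennreal (B M x) \<partial>lborel) = T M"
  using B_int[of "\<lambda>_. 1" M] by (simp add: P_def[symmetric] rP)

lemma A_mass: "(\<integral>\<^sup>+x. ennreal (A M x) \<partial>lborel) + T M = 1"
  using split_int[of "Mp M"] unfolding A_def T_def .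

lemma A_le1: "(\<integral>\<^sup>+x. ennreal (A M x) \<partial>lborel) \<le> 1"
  using A_mass[of M] by (metis add_increasing2 zero_le order_refl le_iff_add)

lemma g_mass: "(\<integral>\<^sup>+x. ennreal (g M x) \<partial>lborel) = 1"
proof -
  have "(\<integral>\<^sup>+x. ennreal (g M x) \<partial>lborel) = (\<integral>\<^sup>+x. ennreal (A M x) + ennreal (B M x) \<partial>lborel)"
    using A_nonneg B_nonneg by (intro nn_integral_cong) (simp add: g_def)
  also have "\<dots> = (\<integral>\<^sup>+x. ennreal (A M x) \<partial>lborel) + (\<integral>\<^sup>+x. ennreal (B M x) \<partial>lborel)"
    by (rule nn_integral_add) auto
  finally show ?thesis using A_mass B_mass by simp
qed

lemma T_tendsto: "(T \<longlongrightarrow> 0) at_top"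
proof -
  have "((\<lambda>M. \<integral>\<^sup>+t. ennreal (f t) * indicator {M<..} t \<partial>lborel) \<longlongrightarrow> 0) at_top"
    by (rule tail1) (auto simp: f_int)
  moreover have "(\<lambda>M. \<integral>\<^sup>+t. ennreal (f t * indicator {M<..} t) \<partial>lborel) = (\<lambda>M. \<integral>\<^sup>+t. ennreal (f t) * indicator {M<..} t \<partial>lborel)"
    by (intro ext nn_integral_cong) (auto simp: indicator_def)
  ultimately have "((\<lambda>M. \<integral>\<^sup>+t. ennreal (f t * indicator {M<..} t) \<partial>lborel) \<longlongrightarrow> 0) at_top"
    by simp
  from tendsto_max_const[OF this, of K] show ?thesis unfolding T_def Mp_def .
qed

lemma r_tendsto: "(r \<longlongrightarrow> 0) at_top"
proof -
  have "((\<lambda>M. enn2real (T M)) \<longlongrightarrow> 0) at_top"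
    by (rule tendsto_enn2real) (use T_tendsto in auto)
  then have "((\<lambda>M. enn2real (T M) / enn2real P) \<longlongrightarrow> 0 / enn2real P) at_top"
    by (rule tendsto_divide) (use r_props(3) in auto)
  then show ?thesis by (simp add: r_def[abs_def])
qed

lemma er_tendsto: "((\<lambda>M. ennreal (r M)) \<longlongrightarrow> 0) at_top"
  using tendsto_ennrealI[OF r_tendsto] by simp

lemma cmult_to0:
  fixes c :: ennreal
  assumes "c < top" "(u \<longlongrightarrow> 0) F"
  shows "((\<lambda>M. u M * c) \<longlongrightarrow> 0) F"
  using ennreal_tendsto_cmult[OF assms] by (simp add: mult.commute)

lemma LL_A_tendsto:
  fixes w :: "real \<Rightarrow> ennreal"
  assumes [measurable]: "w \<in> borel_measurable borel"
  shows "((\<lambda>M. \<integral>\<^sup>+s. ennreal (A M s) * w s \<partial>lborel) \<longlongrightarrow> (\<integral>\<^sup>+s. ennreal (f s) * w s \<partial>lborel)) at_top"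
  using tendsto_max_const[OF mono1[OF f_meas assms f_nonneg], of K] unfolding A_def Mp_def .

lemma LIN:
  fixes w :: "real \<Rightarrow> ennreal" and C :: real
  assumes [measurable]: "w \<in> borel_measurable borel" and C: "0 \<le> C"
    and shift: "\<And>s d. 0 \<le> s \<Longrightarrow> 0 \<le> d \<Longrightarrow> w (s + d) \<le> w s + ennreal (C * d)"
    and fin: "(\<integral>\<^sup>+s. ennreal (f s) * w s \<partial>lborel) < \<infinity>"
    and extra: "((\<lambda>M. ennreal (C * (Mp M + 1)) * T M) \<longlongrightarrow> 0) at_top"
  shows "((\<lambda>M. \<integral>\<^sup>+s. ennreal (g M s) * w s \<partial>lborel) \<longlongrightarrow> (\<integral>\<^sup>+s. ennreal (f s) * w s \<partial>lborel)) at_top"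
proof -
  define LLf where "LLf = (\<integral>\<^sup>+s. ennreal (f s) * w s \<partial>lborel)"
  define LA where "LA M = (\<integral>\<^sup>+s. ennreal (A M s) * w s \<partial>lborel)" for M
  define LB where "LB M = (\<integral>\<^sup>+s. ennreal (B M s) * w s \<partial>lborel)" for M
  have split: "(\<integral>\<^sup>+s. ennreal (g M s) * w s \<partial>lborel) = LA M + LB M" for M
  proof -
    have "(\<integral>\<^sup>+s. ennreal (g M s) * w s \<partial>lborel) = (\<integral>\<^sup>+s. ennreal (A M s) * w s + ennreal (B M s) * w s \<partial>lborel)"
      using A_nonneg B_nonneg by (intro nn_integral_cong) (simp add: g_def distrib_right)
    also have "\<dots> = LA M + LB M" unfolding LA_def LB_def by (rule nn_integral_add) auto
    finally show ?thesis .
  qed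
  have LB_le: "LB M \<le> ennreal (r M) * LLf + ennreal (C * (Mp M + 1)) * T M" for M
  proof -
    have "LB M = ennreal (r M) * (\<integral>\<^sup>+u. ennreal (f u * indicator {..K} u) * w (u + (Mp M + 1)) \<partial>lborel)"
      unfolding LB_def by (rule B_int) simp
    also have "(\<integral>\<^sup>+u. ennreal (f u * indicator {..K} u) * w (u + (Mp M + 1)) \<partial>lborel)
        \<le> (\<integral>\<^sup>+u. ennreal (f u) * w u + ennreal (C * (Mp M + 1)) * ennreal (f u * indicator {..K} u) \<partial>lborel)"
    proof (intro nn_integral_mono)
      fix u :: real
      show "ennreal (f u * indicator {..K} u) * w (u + (Mp M + 1))
          \<le> ennreal (f u) * w u + ennreal (C * (Mp M + 1)) * ennreal (f u * indicator {..K} u)"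
      proof (cases "u < 0")
        case True then show ?thesis by (simp add: f_neg)
      next
        case False
        have "ennreal (f u * indicator {..K} u) * w (u + (Mp M + 1)) \<le> ennreal (f u * indicator {..K} u) * (w u + ennreal (C * (Mp M + 1)))"
          using False Mp_ge(3)[of M] by (intro mult_left_mono shift) auto
        also have "\<dots> = ennreal (f u * indicator {..K} u) * w u + ennreal (C * (Mp M + 1)) * ennreal (f u * indicator {..K} u)"
          by (simp add: distrib_left mult.commute)
        also have "ennreal (f u * indicator {..K} u) * w u \<le> ennreal (f u) * w u"
          using f_nonneg[of u] by (intro mult_right_mono ennreal_leI) (auto simp: indicator_def)
        finally show ?thesis by (simp add: add_right_mono)
      qed
    qed
    also have "\<dots> = LLf + ennreal (C * (Mp M + 1)) * P"
      unfolding LLf_def P_def by (subst nn_integral_add) (auto simp: nn_integral_cmult)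
    finally have "LB M \<le> ennreal (r M) * (LLf + ennreal (C * (Mp M + 1)) * P)"
      by (simp add: mult_left_mono)
    also have "\<dots> = ennreal (r M) * LLf + ennreal (C * (Mp M + 1)) * (ennreal (r M) * P)"
      by (simp add: distrib_left mult.assoc mult.left_commute)
    finally show ?thesis by (simp add: rP)
  qed
  have LA_tend: "(LA \<longlongrightarrow> LLf) at_top" unfolding LA_def LLf_def by (rule LL_A_tendsto) simp
  have up: "((\<lambda>M. LA M + (ennreal (r M) * LLf + ennreal (C * (Mp M + 1)) * T M)) \<longlongrightarrow> LLf + (0 + 0)) at_top"
    by (intro tendsto_add LA_tend cmult_to0 er_tendsto extra) (use fin in \<open>simp add: LLf_def\<close>)
  show ?thesis unfolding split LLf_def[symmetric]
  proof (rule tendsto_sandwich[OF _ _ LA_tend])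
    show "\<forall>\<^sub>F M in at_top. LA M \<le> LA M + LB M" by (simp add: add_increasing2)
    show "\<forall>\<^sub>F M in at_top. LA M + LB M \<le> LA M + (ennreal (r M) * LLf + ennreal (C * (Mp M + 1)) * T M)"
      by (intro always_eventually allI add_left_mono LB_le)
  qed (use up in simp)
qed

end

locale constrP = constr +
  fixes \<eta> \<theta> :: real
  assumes th_pos: "0 < \<theta>" and eta_pos: "0 < \<eta>"
begin

definition "Q M = (\<integral>\<^sup>+t. ennreal (A M t) * ennreal ((\<theta> + \<eta>) * t + C0 \<eta> \<theta>) \<partial>lborel)"
definition "Y M = (\<integral>\<^sup>+t. ennreal (A M t) * ennreal t \<partial>lborel)"

lemma C0_nn: "0 \<le> C0 \<eta> \<theta>" using C0_nonneg th_pos eta_pos by simp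

lemma X1_le: "XX \<eta> \<theta> (A M) (B M) \<le> T M * Q M"
proof -
  have "XX \<eta> \<theta> (A M) (B M) \<le> (\<integral>\<^sup>+s. ennreal (A M s) * (\<integral>\<^sup>+t. ennreal (B M t) * ennreal ((\<theta> + \<eta>) * s + C0 \<eta> \<theta>) \<partial>lborel) \<partial>lborel)"
    unfolding XX_def
  proof (intro nn_integral_mono)
    fix s :: real
    show "ennreal (A M s) * (\<integral>\<^sup>+t. ennreal (B M t) * Phi \<eta> \<theta> s t \<partial>lborel)
        \<le> ennreal (A M s) * (\<integral>\<^sup>+t. ennreal (B M t) * ennreal ((\<theta> + \<eta>) * s + C0 \<eta> \<theta>) \<partial>lborel)"
    proof (cases "A M s = 0")
      case False
      then have s: "0 \<le> s" "s \<le> Mp M" using A_supp by auto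
      show ?thesis
      proof (rule mult_left_mono[OF nn_integral_mono])
        fix t
        show "ennreal (B M t) * Phi \<eta> \<theta> s t \<le> ennreal (B M t) * ennreal ((\<theta> + \<eta>) * s + C0 \<eta> \<theta>)"
        proof (cases "B M t = 0")
          case False
          then have "Mp M + 1 \<le> t" using B_supp by auto
          then show ?thesis using s by (intro mult_left_mono Phi_sep th_pos eta_pos) auto
        qed simp
      qed simp
    qed simp
  qed
  also have "\<dots> = (\<integral>\<^sup>+s. T M * (ennreal (A M s) * ennreal ((\<theta> + \<eta>) * s + C0 \<eta> \<theta>)) \<partial>lborel)"
    by (intro nn_integral_cong) (simp add: nn_integral_multc B_mass mult_ac)
  also have "\<dots> = T M * Q M" unfolding Q_def by (rule nn_integral_cmult) measurable
  finally show ?thesis .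
qed

lemma X2_le: "XX \<eta> \<theta> (B M) (A M) \<le> T M * Q M"
proof -
  have "XX \<eta> \<theta> (B M) (A M) \<le> (\<integral>\<^sup>+s. ennreal (B M s) * Q M \<partial>lborel)"
    unfolding XX_def Q_def
  proof (intro nn_integral_mono)
    fix s :: real
    show "ennreal (B M s) * (\<integral>\<^sup>+t. ennreal (A M t) * Phi \<eta> \<theta> s t \<partial>lborel)
        \<le> ennreal (B M s) * (\<integral>\<^sup>+t. ennreal (A M t) * ennreal ((\<theta> + \<eta>) * t + C0 \<eta> \<theta>) \<partial>lborel)"
    proof (cases "B M s = 0")
      case False
      then have s: "Mp M + 1 \<le> s" using B_supp by auto
      show ?thesis
      proof (rule mult_left_mono[OF nn_integral_mono])
        fix t
        show "ennreal (A M t) * Phi \<eta> \<theta> s t \<le> ennreal (A M t) * ennreal ((\<theta> + \<eta>) * t + C0 \<eta> \<theta>)"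
        proof (cases "A M t = 0")
          case False
          then have "0 \<le> t" "t \<le> Mp M" using A_supp by auto
          then show ?thesis using s by (subst Phi_sym) (intro mult_left_mono Phi_sep th_pos eta_pos, auto)
        qed simp
      qed simp
    qed simp
  qed
  also have "\<dots> = (\<integral>\<^sup>+s. Q M * ennreal (B M s) \<partial>lborel)" by (simp add: mult.commute)
  also have "\<dots> = Q M * T M" by (subst nn_integral_cmult) (auto simp: B_mass)
  also have "\<dots> = T M * Q M" by (simp add: mult.commute)
  finally show ?thesis .
qed

lemma Q_le: "Q M \<le> ennreal (\<theta> + \<eta>) * Y M + ennreal (C0 \<eta> \<theta>)"
proof -
  have "Q M = (\<integral>\<^sup>+t. ennreal (\<theta> + \<eta>) * (ennreal (A M t) * ennreal t) + ennreal (C0 \<eta> \<theta>) * ennreal (A M t) \<partial>lborel)"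
    unfolding Q_def
  proof (intro nn_integral_cong)
    fix t :: real
    show "ennreal (A M t) * ennreal ((\<theta> + \<eta>) * t + C0 \<eta> \<theta>) = ennreal (\<theta> + \<eta>) * (ennreal (A M t) * ennreal t) + ennreal (C0 \<eta> \<theta>) * ennreal (A M t)"
    proof (cases "A M t = 0")
      case False
      then have "0 \<le> t" using A_supp by auto
      have e: "ennreal ((\<theta> + \<eta>) * t + C0 \<eta> \<theta>) = ennreal (\<theta> + \<eta>) * ennreal t + ennreal (C0 \<eta> \<theta>)"
        using \<open>0 \<le> t\<close> th_pos eta_pos C0_nn by (subst ennreal_plus) (auto simp: ennreal_mult)
      show ?thesis unfolding e by (simp add: distrib_left mult_ac)
    qed simp
  qed
  also have "\<dots> = ennreal (\<theta> + \<eta>) * Y M + ennreal (C0 \<eta> \<theta>) * (\<integral>\<^sup>+t. ennreal (A M t) \<partial>lborel)"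
    unfolding Y_def by (subst nn_integral_add) (auto simp: nn_integral_cmult)
  also have "\<dots> \<le> ennreal (\<theta> + \<eta>) * Y M + ennreal (C0 \<eta> \<theta>)"
    using A_le1[of M] by (intro add_left_mono) (simp add: mult_left_le)
  finally show ?thesis .
qed

end

lemma prod_int:
  fixes a b :: "real \<Rightarrow> ennreal"
  assumes [measurable]: "a \<in> borel_measurable borel" "b \<in> borel_measurable borel"
  shows "(\<integral>\<^sup>+x. a x \<partial>lborel) * (\<integral>\<^sup>+y. b y \<partial>lborel) = (\<integral>\<^sup>+x. (\<integral>\<^sup>+y. a x * b y \<partial>lborel) \<partial>lborel)"
proof -
  have "(\<integral>\<^sup>+x. a x \<partial>lborel) * (\<integral>\<^sup>+y. b y \<partial>lborel) = (\<integral>\<^sup>+x. a x * (\<integral>\<^sup>+y. b y \<partial>lborel) \<partial>lborel)"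
    by (rule nn_integral_multc[symmetric]) measurable
  also have "\<dots> = (\<integral>\<^sup>+x. (\<integral>\<^sup>+y. a x * b y \<partial>lborel) \<partial>lborel)"
    by (intro nn_integral_cong nn_integral_cmult[symmetric]) measurable
  finally show ?thesis .
qed

lemma cmult2:
  fixes F :: "real \<Rightarrow> real \<Rightarrow> ennreal"
  assumes [measurable]: "(\<lambda>(s,t). F s t) \<in> borel_measurable (lborel \<Otimes>\<^sub>M lborel)"
  shows "c * (\<integral>\<^sup>+x. (\<integral>\<^sup>+y. F x y \<partial>lborel) \<partial>lborel) = (\<integral>\<^sup>+x. (\<integral>\<^sup>+y. c * F x y \<partial>lborel) \<partial>lborel)"
proof -
  have "c * (\<integral>\<^sup>+x. (\<integral>\<^sup>+y. F x y \<partial>lborel) \<partial>lborel) = (\<integral>\<^sup>+x. c * (\<integral>\<^sup>+y. F x y \<partial>lborel) \<partial>lborel)"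
    by (rule nn_integral_cmult[symmetric]) measurable
  also have "\<dots> = (\<integral>\<^sup>+x. (\<integral>\<^sup>+y. c * F x y \<partial>lborel) \<partial>lborel)"
    by (intro nn_integral_cong nn_integral_cmult[symmetric]) measurable
  finally show ?thesis .
qed

context constrP begin

definition "Zf M = (\<integral>\<^sup>+s. (\<integral>\<^sup>+t. ennreal (f s) * ennreal (f t) * Phi \<eta> \<theta> s t * indicator {M<..} t \<partial>lborel) \<partial>lborel)"

lemma XX_ff: "XX \<eta> \<theta> f f = (\<integral>\<^sup>+s. (\<integral>\<^sup>+t. ennreal (f s) * ennreal (f t) * Phi \<eta> \<theta> s t \<partial>lborel) \<partial>lborel)"
  unfolding XX_def by (intro nn_integral_cong) (subst nn_integral_cmult[symmetric], measurable, simp add: mult.assoc)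

lemma Z_tendsto:
  assumes "XX \<eta> \<theta> f f < \<infinity>"
  shows "((\<lambda>M. Zf (Mp M)) \<longlongrightarrow> 0) at_top"
proof -
  have "((\<lambda>M. Zf M) \<longlongrightarrow> 0) at_top"
    unfolding Zf_def by (rule tail2) (measurable, use assms in \<open>simp add: XX_ff\<close>)
  from tendsto_max_const[OF this, of K] show ?thesis unfolding Mp_def .
qed

lemma TY_le: "ennreal \<theta> * (T M * Y M) \<le> Zf (Mp M)"
proof -
  have "Y M * T M = (\<integral>\<^sup>+s. (\<integral>\<^sup>+t. (ennreal (A M s) * ennreal s) * ennreal (f t * indicator {Mp M<..} t) \<partial>lborel) \<partial>lborel)"
    unfolding T_def Y_def by (rule prod_int) measurable
  then have "ennreal \<theta> * (T M * Y M) = ennreal \<theta> * (\<integral>\<^sup>+s. (\<integral>\<^sup>+t. (ennreal (A M s) * ennreal s) * ennreal (f t * indicator {Mp M<..} t) \<partial>lborel) \<partial>lborel)"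
    by (simp add: mult.commute)
  also have "\<dots> = (\<integral>\<^sup>+s. (\<integral>\<^sup>+t. ennreal \<theta> * ((ennreal (A M s) * ennreal s) * ennreal (f t * indicator {Mp M<..} t)) \<partial>lborel) \<partial>lborel)"
    by (rule cmult2) measurable
  also have "\<dots> \<le> Zf (Mp M)"
    unfolding Zf_def
  proof (intro nn_integral_mono)
    fix s t :: real
    show "ennreal \<theta> * ((ennreal (A M s) * ennreal s) * ennreal (f t * indicator {Mp M<..} t))
        \<le> ennreal (f s) * ennreal (f t) * Phi \<eta> \<theta> s t * indicator {Mp M<..} t"
    proof (cases "A M s = 0 \<or> t \<le> Mp M")
      case False
      then have t: "0 \<le> s" "s \<le> Mp M" "Mp M < t" using A_supp[of M s] by auto
      then have As: "A M s = f s" by (simp add: A_def)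
      have "ennreal \<theta> * ennreal s = ennreal (\<theta> * min s t)" using t th_pos by (simp add: ennreal_mult)
      also have "\<dots> \<le> Phi \<eta> \<theta> s t" by (rule Phi_lower[OF th_pos])
      finally have *: "ennreal \<theta> * ennreal s \<le> Phi \<eta> \<theta> s t" .
      have "ennreal \<theta> * ((ennreal (A M s) * ennreal s) * ennreal (f t * indicator {Mp M<..} t))
          = (ennreal (f s) * ennreal (f t)) * (ennreal \<theta> * ennreal s)" using t As by (simp add: mult_ac)
      also have "\<dots> \<le> (ennreal (f s) * ennreal (f t)) * Phi \<eta> \<theta> s t" using * by (rule mult_left_mono) simp
      finally show ?thesis using t by simp
    qed (auto simp: indicator_def)
  qed
  finally show ?thesis .
qed

lemma MT_le: "ennreal \<theta> * (ennreal (Mp M) * (T M * T M)) \<le> Zf (Mp M)"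
proof -
  have "T M * T M = (\<integral>\<^sup>+s. (\<integral>\<^sup>+t. ennreal (f s * indicator {Mp M<..} s) * ennreal (f t * indicator {Mp M<..} t) \<partial>lborel) \<partial>lborel)"
    unfolding T_def by (rule prod_int) measurable
  then have "ennreal \<theta> * (ennreal (Mp M) * (T M * T M)) = (ennreal \<theta> * ennreal (Mp M)) * (\<integral>\<^sup>+s. (\<integral>\<^sup>+t. ennreal (f s * indicator {Mp M<..} s) * ennreal (f t * indicator {Mp M<..} t) \<partial>lborel) \<partial>lborel)"
    by (simp add: mult.assoc)
  also have "\<dots> = (\<integral>\<^sup>+s. (\<integral>\<^sup>+t. (ennreal \<theta> * ennreal (Mp M)) * (ennreal (f s * indicator {Mp M<..} s) * ennreal (f t * indicator {Mp M<..} t)) \<partial>lborel) \<partial>lborel)"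
    by (rule cmult2) measurable
  also have "\<dots> \<le> Zf (Mp M)"
    unfolding Zf_def
  proof (intro nn_integral_mono)
    fix s t :: real
    show "(ennreal \<theta> * ennreal (Mp M)) * (ennreal (f s * indicator {Mp M<..} s) * ennreal (f t * indicator {Mp M<..} t))
        \<le> ennreal (f s) * ennreal (f t) * Phi \<eta> \<theta> s t * indicator {Mp M<..} t"
    proof (cases "s \<le> Mp M \<or> t \<le> Mp M")
      case False
      then have t: "Mp M < s" "Mp M < t" by auto
      have "ennreal \<theta> * ennreal (Mp M) = ennreal (\<theta> * Mp M)" using Mp_ge(3)[of M] th_pos by (simp add: ennreal_mult)
      also have "\<dots> \<le> ennreal (\<theta> * min s t)" using t th_pos by (intro ennreal_leI mult_left_mono) auto
      also have "\<dots> \<le> Phi \<eta> \<theta> s t" by (rule Phi_lower[OF th_pos])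
      finally have *: "ennreal \<theta> * ennreal (Mp M) \<le> Phi \<eta> \<theta> s t" .
      have "(ennreal \<theta> * ennreal (Mp M)) * (ennreal (f s * indicator {Mp M<..} s) * ennreal (f t * indicator {Mp M<..} t))
          = (ennreal (f s) * ennreal (f t)) * (ennreal \<theta> * ennreal (Mp M))" using t by (simp add: mult_ac)
      also have "\<dots> \<le> (ennreal (f s) * ennreal (f t)) * Phi \<eta> \<theta> s t" using * by (rule mult_left_mono) simp
      finally show ?thesis using t by simp
    qed (auto simp: indicator_def)
  qed
  finally show ?thesis .
qed

lemma Phi_meas1[measurable]: "Phi \<eta> \<theta> s \<in> borel_measurable borel"
  unfolding Phi_def by measurable

lemma BB_le: "XX \<eta> \<theta> (B M) (B M) \<le> ennreal (r M) * (ennreal (r M) * XX \<eta> \<theta> f f) + ennreal ((\<theta> + \<eta>) * (Mp M + 1)) * (T M * T M)"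
proof -
  define d where "d = Mp M + 1"
  define cc where "cc = ennreal ((\<theta> + \<eta>) * d)"
  define fK where "fK u = ennreal (f u * indicator {..K} u)" for u
  define J where "J u = (\<integral>\<^sup>+v. ennreal (f v) * Phi \<eta> \<theta> u v \<partial>lborel)" for u
  define W where "W s = (\<integral>\<^sup>+t. ennreal (B M t) * Phi \<eta> \<theta> s t \<partial>lborel)" for s
  have [measurable]: "fK \<in> borel_measurable borel" unfolding fK_def by measurable
  have [measurable]: "W \<in> borel_measurable borel" unfolding W_def by (rule inner_meas) simp
  have [measurable]: "J \<in> borel_measurable borel" unfolding J_def by (rule inner_meas) simp
  have W_eq: "W s = ennreal (r M) * (\<integral>\<^sup>+v. fK v * Phi \<eta> \<theta> s (v + d) \<partial>lborel)" for s
    unfolding W_def fK_def d_def by (rule B_int) simp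
  have W_le: "W (u + d) \<le> ennreal (r M) * (J u + cc * P)" for u
  proof -
    have "(\<integral>\<^sup>+v. fK v * Phi \<eta> \<theta> (u + d) (v + d) \<partial>lborel) \<le> (\<integral>\<^sup>+v. ennreal (f v) * Phi \<eta> \<theta> u v + cc * fK v \<partial>lborel)"
    proof (intro nn_integral_mono)
      fix v
      have "fK v * Phi \<eta> \<theta> (u + d) (v + d) \<le> fK v * (Phi \<eta> \<theta> u v + cc)"
        unfolding cc_def d_def using Mp_ge(3)[of M] by (intro mult_left_mono Phi_shift th_pos eta_pos) auto
      also have "\<dots> = fK v * Phi \<eta> \<theta> u v + cc * fK v" by (simp add: distrib_left mult.commute)
      also have "fK v * Phi \<eta> \<theta> u v \<le> ennreal (f v) * Phi \<eta> \<theta> u v"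
        unfolding fK_def using f_nonneg[of v] by (intro mult_right_mono ennreal_leI) (auto simp: indicator_def)
      finally show "fK v * Phi \<eta> \<theta> (u + d) (v + d) \<le> ennreal (f v) * Phi \<eta> \<theta> u v + cc * fK v" by (simp add: add_right_mono)
    qed
    also have "\<dots> = J u + cc * P"
      unfolding J_def P_def fK_def by (subst nn_integral_add) (auto simp: nn_integral_cmult)
    finally show ?thesis unfolding W_eq by (simp add: mult_left_mono)
  qed
  have "XX \<eta> \<theta> (B M) (B M) = (\<integral>\<^sup>+s. ennreal (B M s) * W s \<partial>lborel)"
    unfolding XX_def W_def ..
  also have "\<dots> = ennreal (r M) * (\<integral>\<^sup>+u. fK u * W (u + d) \<partial>lborel)"
    unfolding fK_def d_def by (rule B_int) simp
  also have "(\<integral>\<^sup>+u. fK u * W (u + d) \<partial>lborel) \<le> (\<integral>\<^sup>+u. ennreal (r M) * (ennreal (f u) * J u) + (ennreal (r M) * cc * P) * fK u \<partial>lborel)"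
  proof (intro nn_integral_mono)
    fix u
    have "fK u * W (u + d) \<le> fK u * (ennreal (r M) * (J u + cc * P))" by (intro mult_left_mono W_le) simp
    also have "\<dots> = ennreal (r M) * (fK u * J u) + (ennreal (r M) * cc * P) * fK u" by (simp add: distrib_left mult_ac)
    also have "fK u * J u \<le> ennreal (f u) * J u"
      unfolding fK_def using f_nonneg[of u] by (intro mult_right_mono ennreal_leI) (auto simp: indicator_def)
    finally show "fK u * W (u + d) \<le> ennreal (r M) * (ennreal (f u) * J u) + (ennreal (r M) * cc * P) * fK u"
      by (simp add: add_right_mono mult_left_mono)
  qed
  also have "\<dots> = ennreal (r M) * XX \<eta> \<theta> f f + (ennreal (r M) * cc * P) * P"
    unfolding XX_def J_def[symmetric] P_def fK_def by (subst nn_integral_add) (auto simp: nn_integral_cmult)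
  finally have "XX \<eta> \<theta> (B M) (B M) \<le> ennreal (r M) * (ennreal (r M) * XX \<eta> \<theta> f f + (ennreal (r M) * cc * P) * P)"
    by (simp add: mult_left_mono)
  also have "\<dots> = ennreal (r M) * (ennreal (r M) * XX \<eta> \<theta> f f) + cc * ((ennreal (r M) * P) * (ennreal (r M) * P))"
    by (simp add: distrib_left mult_ac)
  finally show ?thesis unfolding rP cc_def d_def .
qed

lemma le_to0:
  fixes u v :: "real \<Rightarrow> ennreal"
  assumes "\<And>M. u M \<le> v M" "(v \<longlongrightarrow> 0) at_top"
  shows "(u \<longlongrightarrow> 0) at_top"
  by (rule tendsto_sandwich[of "\<lambda>_. 0" _ _ v]) (use assms in auto)

lemma div_theta: "ennreal \<theta> * X \<le> Z \<Longrightarrow> X \<le> ennreal (1/\<theta>) * Z"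
proof -
  assume "ennreal \<theta> * X \<le> Z"
  then have "ennreal (1/\<theta>) * (ennreal \<theta> * X) \<le> ennreal (1/\<theta>) * Z" by (rule mult_left_mono) simp
  moreover have "ennreal (1/\<theta>) * ennreal \<theta> = 1" using th_pos by (simp add: ennreal_mult[symmetric])
  ultimately show ?thesis by (simp add: mult.assoc[symmetric])
qed

lemma T2_tendsto: "((\<lambda>M. T M * T M) \<longlongrightarrow> 0) at_top"
  using tendsto_mult_ennreal[OF T_tendsto T_tendsto] by simp

lemma HH_conv:
  assumes fin: "XX \<eta> \<theta> f f < \<infinity>"
  shows "((\<lambda>M. XX \<eta> \<theta> (g M) (g M)) \<longlongrightarrow> XX \<eta> \<theta> f f) at_top"
proof -
  have Z: "((\<lambda>M. ennreal (1/\<theta>) * Zf (Mp M)) \<longlongrightarrow> 0) at_top"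
    using ennreal_tendsto_cmult[OF _ Z_tendsto[OF fin], of "ennreal (1/\<theta>)"] by simp
  define E where "E M = T M * Q M + T M * Q M + (ennreal (r M) * (ennreal (r M) * XX \<eta> \<theta> f f) + ennreal ((\<theta> + \<eta>) * (Mp M + 1)) * (T M * T M))" for M
  have split: "XX \<eta> \<theta> (g M) (g M) = XX \<eta> \<theta> (A M) (A M) + XX \<eta> \<theta> (A M) (B M) + XX \<eta> \<theta> (B M) (A M) + XX \<eta> \<theta> (B M) (B M)" for M
  proof -
    have "g M = (\<lambda>x. A M x + B M x)" by (simp add: g_def[abs_def])
    then show ?thesis by (simp add: XX_add A_nonneg B_nonneg)
  qed
  have up: "XX \<eta> \<theta> (g M) (g M) \<le> XX \<eta> \<theta> (A M) (A M) + E M" for M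
    unfolding split E_def using X1_le[of M] X2_le[of M] BB_le[of M]
    by (simp add: add.assoc add_mono)
  have low: "XX \<eta> \<theta> (A M) (A M) \<le> XX \<eta> \<theta> (g M) (g M)" for M
    unfolding split by (simp add: add.assoc add_increasing2)
  have AA: "((\<lambda>M. XX \<eta> \<theta> (A M) (A M)) \<longlongrightarrow> XX \<eta> \<theta> f f) at_top"
    using tendsto_max_const[OF mono2[OF f_meas _ f_nonneg, of "Phi \<eta> \<theta>"], of K]
    unfolding XX_def A_def Mp_def by simp
  have TQ: "((\<lambda>M. T M * Q M) \<longlongrightarrow> 0) at_top"
  proof (rule le_to0)
    fix M
    have "T M * Q M \<le> T M * (ennreal (\<theta> + \<eta>) * Y M + ennreal (C0 \<eta> \<theta>))"
      by (intro mult_left_mono Q_le) simp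
    also have "\<dots> = ennreal (\<theta> + \<eta>) * (T M * Y M) + ennreal (C0 \<eta> \<theta>) * T M"
      by (simp add: distrib_left mult_ac)
    also have "\<dots> \<le> ennreal (\<theta> + \<eta>) * (ennreal (1/\<theta>) * Zf (Mp M)) + ennreal (C0 \<eta> \<theta>) * T M"
      by (intro add_right_mono mult_left_mono div_theta TY_le) simp
    finally show "T M * Q M \<le> ennreal (\<theta> + \<eta>) * (ennreal (1/\<theta>) * Zf (Mp M)) + ennreal (C0 \<eta> \<theta>) * T M" .
  next
    show "((\<lambda>M. ennreal (\<theta> + \<eta>) * (ennreal (1/\<theta>) * Zf (Mp M)) + ennreal (C0 \<eta> \<theta>) * T M) \<longlongrightarrow> 0) at_top"
      using tendsto_add[OF ennreal_tendsto_cmult[OF _ Z, of "ennreal (\<theta> + \<eta>)"] ennreal_tendsto_cmult[OF _ T_tendsto, of "ennreal (C0 \<eta> \<theta>)"]]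
      by simp
  qed
  have RR: "((\<lambda>M. ennreal (r M) * (ennreal (r M) * XX \<eta> \<theta> f f)) \<longlongrightarrow> 0) at_top"
  proof -
    have "((\<lambda>M. ennreal (r M) * XX \<eta> \<theta> f f) \<longlongrightarrow> 0) at_top"
      by (rule cmult_to0[OF _ er_tendsto]) (use fin in simp)
    from tendsto_mult_ennreal[OF er_tendsto this] show ?thesis by simp
  qed
  have CT: "((\<lambda>M. ennreal ((\<theta> + \<eta>) * (Mp M + 1)) * (T M * T M)) \<longlongrightarrow> 0) at_top"
  proof (rule le_to0)
    fix M
    have "ennreal ((\<theta> + \<eta>) * (Mp M + 1)) * (T M * T M) = ennreal (\<theta> + \<eta>) * (ennreal (Mp M) * (T M * T M) + T M * T M)"
      using th_pos eta_pos Mp_ge(3)[of M] by (simp add: ennreal_mult ennreal_plus distrib_left distrib_right mult_ac)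
    also have "\<dots> \<le> ennreal (\<theta> + \<eta>) * (ennreal (1/\<theta>) * Zf (Mp M) + T M * T M)"
      by (intro mult_left_mono add_right_mono div_theta MT_le) simp
    finally show "ennreal ((\<theta> + \<eta>) * (Mp M + 1)) * (T M * T M) \<le> ennreal (\<theta> + \<eta>) * (ennreal (1/\<theta>) * Zf (Mp M) + T M * T M)" .
  next
    show "((\<lambda>M. ennreal (\<theta> + \<eta>) * (ennreal (1/\<theta>) * Zf (Mp M) + T M * T M)) \<longlongrightarrow> 0) at_top"
      using ennreal_tendsto_cmult[OF _ tendsto_add[OF Z T2_tendsto], of "ennreal (\<theta> + \<eta>)"] by simp
  qed
  have E: "(E \<longlongrightarrow> 0) at_top"
    unfolding E_def[abs_def] using tendsto_add[OF tendsto_add[OF TQ TQ] tendsto_add[OF RR CT]] by simp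
  show ?thesis
  proof (rule tendsto_sandwich[OF _ _ AA])
    show "\<forall>\<^sub>F M in at_top. XX \<eta> \<theta> (A M) (A M) \<le> XX \<eta> \<theta> (g M) (g M)" by (simp add: low)
    show "\<forall>\<^sub>F M in at_top. XX \<eta> \<theta> (g M) (g M) \<le> XX \<eta> \<theta> (A M) (A M) + E M" by (simp add: up)
    show "((\<lambda>M. XX \<eta> \<theta> (A M) (A M) + E M) \<longlongrightarrow> XX \<eta> \<theta> f f) at_top"
      using tendsto_add[OF AA E] by simp
  qed
qed

end

context constr begin

lemma int_nn:
  fixes u :: "real \<Rightarrow> real"
  assumes [measurable]: "u \<in> borel_measurable borel" and "\<And>x. 0 \<le> u x" "(\<integral>\<^sup>+x. ennreal (u x) \<partial>lborel) < \<infinity>"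
  shows "integrable lborel u"
  by (rule integrableI_nonneg) (use assms in auto)

lemma int_bdd:
  fixes u h :: "real \<Rightarrow> real"
  assumes "integrable lborel u" "\<And>x. 0 \<le> u x" and [measurable]: "h \<in> borel_measurable borel" "u \<in> borel_measurable borel"
    and bd: "\<And>x. \<bar>h x\<bar> \<le> Bd"
  shows "integrable lborel (\<lambda>x. u x * h x)"
proof (rule Bochner_Integration.integrable_bound)
  show "integrable lborel (\<lambda>x. Bd * u x)" using assms(1) by simp
  show "AE x in lborel. norm (u x * h x) \<le> norm (Bd * u x)"
  proof (intro always_eventually allI)
    fix x
    have "u x * \<bar>h x\<bar> \<le> u x * Bd" using bd[of x] assms(2)[of x] by (rule mult_left_mono)
    also have "\<dots> \<le> \<bar>Bd\<bar> * u x" using mult_right_mono[OF abs_ge_self[of Bd] assms(2)[of x]] by (simp add: mult.commute)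
    finally show "norm (u x * h x) \<le> norm (Bd * u x)" using assms(2)[of x] by (simp add: abs_mult)
  qed
qed measurable

lemma weak:
  fixes h :: "real \<Rightarrow> real"
  assumes hc: "continuous_on UNIV h" and hb: "bounded (range h)"
  shows "((\<lambda>M. \<integral>x. h x \<partial>density lborel (\<lambda>x. ennreal (g M x))) \<longlongrightarrow> (\<integral>x. h x \<partial>density lborel (\<lambda>x. ennreal (f x)))) at_top"
proof -
  have [measurable]: "h \<in> borel_measurable borel" using hc by (rule borel_measurable_continuous_onI)
  obtain Bd where bd: "\<And>x. \<bar>h x\<bar> \<le> Bd" using hb unfolding bounded_iff by auto
  have Bd0: "0 \<le> Bd" using bd[of 0] by simp
  define Fo where "Fo M x = f x * indicator {Mp M<..} x" for M x
  have [measurable]: "Fo M \<in> borel_measurable borel" for M unfolding Fo_def by measurable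
  have Fo0: "0 \<le> Fo M x" for M x using f_nonneg by (simp add: Fo_def)
  have intf: "integrable lborel f" by (rule int_nn) (auto simp: f_nonneg f_int)
  have intg: "integrable lborel (g M)" for M by (rule int_nn) (auto simp: g_nonneg g_mass)
  have intB: "integrable lborel (B M)" for M by (rule int_nn) (auto simp: B_nonneg B_mass T_le1 le_less_trans[OF _ ennreal_one_less_top])
  have intFo: "integrable lborel (Fo M)" for M
  proof (rule int_nn[OF _ Fo0])
    show "(\<integral>\<^sup>+x. ennreal (Fo M x) \<partial>lborel) < \<infinity>"
      unfolding Fo_def T_def[symmetric] using T_le1[of M] le_less_trans[OF _ ennreal_one_less_top] by auto
  qed measurable
  have IB: "(\<integral>x. B M x \<partial>lborel) = enn2real (T M)" for M
    by (subst integral_eq_nn_integral) (auto simp: B_nonneg B_mass)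
  have IFo: "(\<integral>x. Fo M x \<partial>lborel) = enn2real (T M)" for M
    by (subst integral_eq_nn_integral) (auto simp: Fo0 T_def Fo_def[symmetric])
  have dens: "(\<integral>x. h x \<partial>density lborel (\<lambda>x. ennreal (u x))) = (\<integral>x. u x * h x \<partial>lborel)"
    if [measurable]: "u \<in> borel_measurable borel" and "\<And>x. 0 \<le> u x" for u
    using that by (subst integral_density) auto
  have gf: "g M x - f x = B M x - Fo M x" for M x
    by (simp add: g_def A_def Fo_def indicator_def)
  have diff: "\<bar>(\<integral>x. h x \<partial>density lborel (\<lambda>x. ennreal (g M x))) - (\<integral>x. h x \<partial>density lborel (\<lambda>x. ennreal (f x)))\<bar>
      \<le> 2 * Bd * enn2real (T M)" for M
  proof -
    have ig: "integrable lborel (\<lambda>x. g M x * h x)" by (rule int_bdd[OF intg g_nonneg _ _ bd]) auto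
    have iF: "integrable lborel (\<lambda>x. f x * h x)" by (rule int_bdd[OF intf f_nonneg _ _ bd]) auto
    have iB: "integrable lborel (\<lambda>x. B M x * h x)" by (rule int_bdd[OF intB B_nonneg _ _ bd]) auto
    have iFo: "integrable lborel (\<lambda>x. Fo M x * h x)" by (rule int_bdd[OF intFo Fo0 _ _ bd]) auto
    have "(\<integral>x. h x \<partial>density lborel (\<lambda>x. ennreal (g M x))) - (\<integral>x. h x \<partial>density lborel (\<lambda>x. ennreal (f x)))
        = (\<integral>x. g M x * h x \<partial>lborel) - (\<integral>x. f x * h x \<partial>lborel)"
      by (simp add: dens g_nonneg f_nonneg)
    also have "\<dots> = (\<integral>x. g M x * h x - f x * h x \<partial>lborel)"
      by (rule Bochner_Integration.integral_diff[symmetric, OF ig iF])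
    also have "\<dots> = (\<integral>x. B M x * h x - Fo M x * h x \<partial>lborel)"
      by (intro Bochner_Integration.integral_cong refl) (metis gf left_diff_distrib)
    also have "\<dots> = (\<integral>x. B M x * h x \<partial>lborel) - (\<integral>x. Fo M x * h x \<partial>lborel)"
      by (rule Bochner_Integration.integral_diff[OF iB iFo])
    finally have eq: "(\<integral>x. h x \<partial>density lborel (\<lambda>x. ennreal (g M x))) - (\<integral>x. h x \<partial>density lborel (\<lambda>x. ennreal (f x)))
        = (\<integral>x. B M x * h x \<partial>lborel) - (\<integral>x. Fo M x * h x \<partial>lborel)" .
    have b1: "\<bar>\<integral>x. u x * h x \<partial>lborel\<bar> \<le> Bd * (\<integral>x. u x \<partial>lborel)"
      if iu: "integrable lborel u" and u0: "\<And>x. 0 \<le> u x" and [measurable]: "u \<in> borel_measurable borel" for u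
    proof -
      have "\<bar>\<integral>x. u x * h x \<partial>lborel\<bar> \<le> (\<integral>x. norm (u x * h x) \<partial>lborel)"
        using integral_norm_bound[of lborel "\<lambda>x. u x * h x"] by simp
      also have "\<dots> \<le> (\<integral>x. Bd * u x \<partial>lborel)"
      proof (rule integral_mono)
        show "integrable lborel (\<lambda>x. norm (u x * h x))"
          using int_bdd[OF iu u0 _ _ bd] by (intro integrable_norm) auto
        show "integrable lborel (\<lambda>x. Bd * u x)" using iu by simp
        fix x show "norm (u x * h x) \<le> Bd * u x"
          using mult_left_mono[OF bd[of x] u0[of x]] u0[of x] by (simp add: abs_mult mult.commute)
      qed
      finally show ?thesis by simp
    qed
    have "\<bar>(\<integral>x. B M x * h x \<partial>lborel) - (\<integral>x. Fo M x * h x \<partial>lborel)\<bar>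
        \<le> \<bar>\<integral>x. B M x * h x \<partial>lborel\<bar> + \<bar>\<integral>x. Fo M x * h x \<partial>lborel\<bar>" by (rule abs_triangle_ineq4)
    also have "\<dots> \<le> Bd * enn2real (T M) + Bd * enn2real (T M)"
      using b1[OF intB[of M] B_nonneg B_meas] b1[OF intFo[of M] Fo0] unfolding IB IFo
      by (intro add_mono) auto
    finally show ?thesis unfolding eq by simp
  qed
  have "((\<lambda>M. 2 * Bd * enn2real (T M)) \<longlongrightarrow> 2 * Bd * 0) at_top"
    by (intro tendsto_mult_left tendsto_enn2real) (use T_tendsto in auto)
  then have lim0: "((\<lambda>M. 2 * Bd * enn2real (T M)) \<longlongrightarrow> 0) at_top" by simp
  have "\<forall>M. norm ((\<integral>x. h x \<partial>density lborel (\<lambda>x. ennreal (g M x))) - (\<integral>x. h x \<partial>density lborel (\<lambda>x. ennreal (f x)))) \<le> 2 * Bd * enn2real (T M)"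
    unfolding real_norm_def using diff by blast
  from Lim_null_comparison[OF always_eventually[OF this] lim0]
  have "((\<lambda>M. (\<integral>x. h x \<partial>density lborel (\<lambda>x. ennreal (g M x))) - (\<integral>x. h x \<partial>density lborel (\<lambda>x. ennreal (f x)))) \<longlongrightarrow> 0) at_top" .
  then show ?thesis by (rule LIM_zero_cancel)
qed

end

definition psi0 :: "real \<Rightarrow> real \<Rightarrow> real \<Rightarrow> real \<Rightarrow> real \<Rightarrow> real \<Rightarrow> ennreal" where
  "psi0 \<eta> \<theta> \<beta> \<gamma> \<xi> x =
     (if \<xi> \<le> 0 then
        (\<integral>\<^sup>+u\<in>{\<gamma>\<^sup>2 - 1..\<bar>\<xi>\<bar>}. nlog (1 - x powr \<theta> * exp (\<beta> * \<theta> * u)) \<partial>lborel)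
      else if \<xi> \<le> 1 - \<gamma>\<^sup>2 then
        (\<integral>\<^sup>+u\<in>{0..1 - \<gamma>\<^sup>2 - \<xi>}. nlog (1 - x powr \<theta> * exp (- \<beta> * \<theta> * u)) \<partial>lborel)
      else
        (\<integral>\<^sup>+u\<in>{1 - \<gamma>\<^sup>2 - \<xi>..0}. nlog (1 - x powr \<eta> * exp (- \<beta> * \<eta> * u)) \<partial>lborel))"

lemma psi0_meas[measurable]: "psi0 \<eta> \<theta> \<beta> \<gamma> \<xi> \<in> borel_measurable borel"
proof -
  have "psi0 \<eta> \<theta> \<beta> \<gamma> \<xi> \<in> borel_measurable lborel"
    unfolding psi0_def by measurable
  then show ?thesis by simp
qed

definition cM :: "real \<Rightarrow> real \<Rightarrow> real \<Rightarrow> real \<Rightarrow> ennreal" where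
  "cM \<eta> \<theta> \<gamma> \<xi> = (if \<xi> \<le> 0 then ennreal (kappa \<gamma> \<xi> * \<eta> * \<bar>\<xi>\<bar>) else ennreal (kappa \<gamma> \<xi> * \<theta> * \<xi>))"

lemma Itilde_dens:
  fixes g :: "real \<Rightarrow> real"
  assumes [measurable]: "g \<in> borel_measurable borel"
  shows "Itilde \<eta> \<theta> \<beta> \<gamma> \<xi> (density lborel (\<lambda>x. ennreal (g x)))
    = ennreal ((kappa \<gamma> \<xi>)\<^sup>2 / 2) * XX \<eta> \<theta> g g
      + ennreal (kappa \<gamma> \<xi>) * (\<integral>\<^sup>+s. ennreal (g s) * psi0 \<eta> \<theta> \<beta> \<gamma> \<xi> (exp (- s)) \<partial>lborel)
      + cM \<eta> \<theta> \<gamma> \<xi> * (\<integral>\<^sup>+s. ennreal (g s) * nlog (exp (- s)) \<partial>lborel)"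
proof -
  define \<mu> where "\<mu> = distr (density lborel (\<lambda>x. ennreal (g x))) borel (\<lambda>x. exp (- x))"
  define F where "F x y = nlog \<bar>x powr \<theta> - y powr \<theta>\<bar> + nlog \<bar>x powr \<eta> - y powr \<eta>\<bar>" for x y :: real
  have Fm[measurable]: "(\<lambda>(x, y). F x y) \<in> borel_measurable (lborel \<Otimes>\<^sub>M lborel)" unfolding F_def by measurable
  have Fm1[measurable]: "F x \<in> borel_measurable borel" for x unfolding F_def by measurable
  have inner: "(\<integral>\<^sup>+y. F x y \<partial>\<mu>) = (\<integral>\<^sup>+t. ennreal (g t) * F x (exp (- t)) \<partial>lborel)" for x
    unfolding \<mu>_def by (rule nn_distr_dens) measurable
  have Gm: "(\<lambda>x. \<integral>\<^sup>+t. ennreal (g t) * F x (exp (- t)) \<partial>lborel) \<in> borel_measurable borel"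
  proof -
    have "(\<lambda>x. \<integral>\<^sup>+t. ennreal (g t) * F x (exp (- t)) \<partial>lborel) \<in> borel_measurable lborel" by measurable
    then show ?thesis by simp
  qed
  have H: "(\<integral>\<^sup>+x. (\<integral>\<^sup>+y. F x y \<partial>\<mu>) \<partial>\<mu>) = XX \<eta> \<theta> g g"
    unfolding inner unfolding \<mu>_def
    by (subst nn_distr_dens[OF _ Gm]) (simp_all add: XX_def F_def Phi_def)
  have Hn: "Hneg \<eta> \<theta> \<gamma> \<xi> \<mu> = ennreal ((kappa \<gamma> \<xi>)\<^sup>2 / 2) * XX \<eta> \<theta> g g"
    unfolding Hneg_def H[symmetric] F_def ..
  have Kn: "Kneg \<eta> \<theta> \<beta> \<gamma> \<xi> \<mu> = ennreal (kappa \<gamma> \<xi>) * (\<integral>\<^sup>+s. ennreal (g s) * psi0 \<eta> \<theta> \<beta> \<gamma> \<xi> (exp (- s)) \<partial>lborel)"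
  proof -
    have "Kneg \<eta> \<theta> \<beta> \<gamma> \<xi> \<mu> = ennreal (kappa \<gamma> \<xi>) * (\<integral>\<^sup>+x. psi0 \<eta> \<theta> \<beta> \<gamma> \<xi> x \<partial>\<mu>)"
      unfolding Kneg_def psi0_def by (cases "\<xi> \<le> 0"; cases "\<xi> \<le> 1 - \<gamma>\<^sup>2") simp_all
    also have "(\<integral>\<^sup>+x. psi0 \<eta> \<theta> \<beta> \<gamma> \<xi> x \<partial>\<mu>) = (\<integral>\<^sup>+s. ennreal (g s) * psi0 \<eta> \<theta> \<beta> \<gamma> \<xi> (exp (- s)) \<partial>lborel)"
      unfolding \<mu>_def by (rule nn_distr_dens) measurable
    finally show ?thesis .
  qed
  have Mn: "Mneg \<eta> \<theta> \<gamma> \<xi> \<mu> = cM \<eta> \<theta> \<gamma> \<xi> * (\<integral>\<^sup>+s. ennreal (g s) * nlog (exp (- s)) \<partial>lborel)"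
    unfolding Mneg_def cM_def[symmetric] \<mu>_def by (subst nn_distr_dens) measurable
  show ?thesis unfolding Itilde_def Ixi_def \<mu>_def[symmetric] Hn Kn Mn ..
qed

lemma psi_shift:
  assumes "0 < \<eta>" "0 < \<theta>" "0 \<le> d"
  shows "psi0 \<eta> \<theta> \<beta> \<gamma> \<xi> (exp (- (s + d))) \<le> psi0 \<eta> \<theta> \<beta> \<gamma> \<xi> (exp (- s))"
proof -
  have key: "nlog (1 - x' powr c * e) * indicator I u \<le> nlog (1 - x powr c * e) * indicator I u"
    if "0 < c" "0 < e" "0 \<le> x'" "x' \<le> x" for c e x x' :: real and I and u :: real
  proof -
    have "x' powr c \<le> x powr c" using assms that by (intro powr_mono2) auto
    then have "1 - x powr c * e \<le> 1 - x' powr c * e" using that by (simp add: mult_right_mono)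
    then show ?thesis by (intro mult_right_mono nlog_antimono) auto
  qed
  show ?thesis unfolding psi0_def using assms
    by (auto intro!: nn_integral_mono key)
qed

lemma nu_shift: "0 \<le> d \<Longrightarrow> nlog (exp (- (s + d))) \<le> nlog (exp (- s)) + ennreal (1 * d)"
  unfolding nlog_exp by (simp add: ennreal_add_le)

context constr begin

lemma nu_extra:
  assumes fin: "(\<integral>\<^sup>+s. ennreal (f s) * nlog (exp (- s)) \<partial>lborel) < \<infinity>"
  shows "((\<lambda>M. ennreal (1 * (Mp M + 1)) * T M) \<longlongrightarrow> 0) at_top"
proof -
  define Z where "Z M = (\<integral>\<^sup>+s. ennreal (f s) * nlog (exp (- s)) * indicator {M<..} s \<partial>lborel)" for M
  have Z: "((\<lambda>M. Z (Mp M)) \<longlongrightarrow> 0) at_top"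
    using tendsto_max_const[OF tail1[OF _ fin], of K] unfolding Z_def Mp_def by simp
  have le: "ennreal (Mp M) * T M \<le> Z (Mp M)" for M
  proof -
    have "ennreal (Mp M) * T M = (\<integral>\<^sup>+s. ennreal (Mp M) * ennreal (f s * indicator {Mp M<..} s) \<partial>lborel)"
      unfolding T_def by (rule nn_integral_cmult[symmetric]) measurable
    also have "\<dots> \<le> Z (Mp M)" unfolding Z_def
    proof (intro nn_integral_mono)
      fix s
      show "ennreal (Mp M) * ennreal (f s * indicator {Mp M<..} s) \<le> ennreal (f s) * nlog (exp (- s)) * indicator {Mp M<..} s"
      proof (cases "Mp M < s")
        case True
        then have "ennreal (Mp M) \<le> nlog (exp (- s))" unfolding nlog_exp by (intro ennreal_leI) simp
        then show ?thesis using True by (simp add: mult.commute mult_left_mono)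
      qed (simp add: indicator_def)
    qed
    finally show ?thesis .
  qed
  have "((\<lambda>M. ennreal (Mp M) * T M) \<longlongrightarrow> 0) at_top"
    by (rule tendsto_sandwich[of "\<lambda>_. 0" _ _ "\<lambda>M. Z (Mp M)"]) (use le Z in auto)
  from tendsto_add[OF this T_tendsto] have "((\<lambda>M. ennreal (Mp M) * T M + T M) \<longlongrightarrow> 0) at_top" by simp
  moreover have "ennreal (1 * (Mp M + 1)) * T M = ennreal (Mp M) * T M + T M" for M
    using Mp_ge(3)[of M] by (simp add: ennreal_plus distrib_right)
  ultimately show ?thesis by simp
qed

end



lemma cterm:
  fixes c X :: ennreal and Y :: "real \<Rightarrow> ennreal"
  assumes "c * X < \<infinity>" "c < top" "X < \<infinity> \<Longrightarrow> (Y \<longlongrightarrow> X) at_top"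
  shows "((\<lambda>M. c * Y M) \<longlongrightarrow> c * X) at_top"
proof (cases "c = 0")
  case False
  then have "X < \<infinity>" using assms(1) by (auto simp: ennreal_mult_less_top)
  then show ?thesis by (intro ennreal_tendsto_cmult assms(2) assms(3))
qed simp

lemma kappa_props:
  assumes "0 < \<gamma>" "\<gamma> < 1" "- (\<gamma>\<^sup>2) < \<xi>" "\<xi> \<le> 1"
  shows "0 \<le> kappa \<gamma> \<xi>" "0 \<le> \<gamma>\<^sup>2 - kappa \<gamma> \<xi>"
  using assms by (auto simp: kappa_def)

lemma Qset_D:
  assumes "lam \<in> Qset \<beta> \<gamma> \<xi>"
  obtains f0 where "prob_space lam" "emeasure lam {..<\<beta> * (\<gamma>\<^sup>2 - kappa \<gamma> \<xi>)} = 0"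
    "f0 \<in> borel_measurable borel" "\<And>x. 0 \<le> f0 x" "\<And>x. \<beta> * kappa \<gamma> \<xi> * f0 x \<le> 1"
    "lam = density lborel (\<lambda>x. ennreal (f0 x))"
  using assms unfolding Qset_def by blast

context constr begin

lemma g_le: "g M x \<le> f x \<or> g M x \<le> f (x - (Mp M + 1))"
proof (cases "x \<le> Mp M")
  case True
  then have "B M x = 0" using B_supp[of M x] by auto
  then have "g M x = A M x" by (simp add: g_def)
  then show ?thesis using f_nonneg[of x] by (auto simp: A_def indicator_def)
next
  case False
  then have "A M x = 0" by (simp add: A_def)
  then have "g M x = B M x" by (simp add: g_def)
  moreover have "B M x \<le> f (x - (Mp M + 1))"
    using r_props(1,2)[of M] f_nonneg[of "x - (Mp M + 1)"]
    by (auto simp: B_def indicator_def intro: mult_left_le_one_le)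
  ultimately show ?thesis by simp
qed

lemma g_below: assumes "\<And>y. y < a \<Longrightarrow> f y = 0" "x < a" shows "g M x = 0"
proof -
  have "A M x = 0" using assms by (simp add: A_def)
  moreover have "B M x = 0" using assms(1)[of "x - (Mp M + 1)"] assms(2) Mp_ge(3)[of M] by (simp add: B_def)
  ultimately show ?thesis by (simp add: g_def)
qed

lemma g_supp: "g M x \<noteq> 0 \<Longrightarrow> x \<in> {0..Mp M + 1 + K}"
  using A_supp[of M x] B_supp[of M x] Mp_ge(1,3)[of M] K_ge by (cases "A M x = 0") (auto simp: g_def)

end

theorem mainTheorem6:
  fixes \<eta> \<theta> \<beta> \<gamma> \<xi> :: real and lam :: "real measure"
  assumes "\<eta> > 0" and "\<theta> > 0" and "0 < \<gamma>" and "\<gamma> < 1" and "\<beta> > 0"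
    and "- (\<gamma>\<^sup>2) < \<xi>" and "\<xi> \<le> 1"
    and "lam \<in> Qset \<beta> \<gamma> \<xi>"
    and "Itilde \<eta> \<theta> \<beta> \<gamma> \<xi> lam < \<infinity>"
  shows "\<exists>lams :: real \<Rightarrow> real measure.
           (\<forall>M > 0. lams M \<in> Qset \<beta> \<gamma> \<xi> \<and> compactly_supported (lams M)) \<and>
           weak_conv_filter lams lam at_top \<and>
           ((\<lambda>M. Itilde \<eta> \<theta> \<beta> \<gamma> \<xi> (lams M)) \<longlongrightarrow> Itilde \<eta> \<theta> \<beta> \<gamma> \<xi> lam) at_top"
proof -
  note eta = assms(1) and th = assms(2) and bet = assms(5)
  define a where "a = \<beta> * (\<gamma>\<^sup>2 - kappa \<gamma> \<xi>)"
  obtain f0 where ps: "prob_space lam" and ea: "emeasure lam {..<a} = 0"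
    and f0m[measurable]: "f0 \<in> borel_measurable borel" and f0nn: "\<And>x. 0 \<le> f0 x"
    and f0b: "\<And>x. \<beta> * kappa \<gamma> \<xi> * f0 x \<le> 1"
    and lam0: "lam = density lborel (\<lambda>x. ennreal (f0 x))"
    using Qset_D[OF assms(8)] unfolding a_def by metis
  have kap0: "0 \<le> kappa \<gamma> \<xi>" and a0: "0 \<le> a"
    using kappa_props[OF assms(3,4,6,7)] bet unfolding a_def by auto
  define f where "f x = f0 x * indicator {a..} x" for x
  have fm[measurable]: "f \<in> borel_measurable borel" unfolding f_def by measurable
  have fnn: "0 \<le> f x" for x using f0nn[of x] by (simp add: f_def)
  have fle: "f x \<le> f0 x" for x using f0nn[of x] by (simp add: f_def indicator_def)
  have fbelow: "f x = 0" if "x < a" for x using that by (simp add: f_def)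
  have lam_f: "lam = density lborel (\<lambda>x. ennreal (f x))"
  proof -
    have "(\<integral>\<^sup>+x. ennreal (f0 x) * indicator {..<a} x \<partial>lborel) = 0"
      using ea unfolding lam0 by (subst (asm) emeasure_density) auto
    then have "AE x in lborel. ennreal (f0 x) * indicator {..<a} x = 0"
      by (subst (asm) nn_integral_0_iff_AE) auto
    then have "AE x in lborel. ennreal (f0 x) = ennreal (f x)"
      by eventually_elim (auto simp: f_def indicator_def split: if_splits)
    then show ?thesis unfolding lam0 by (intro density_cong) auto
  qed
  have fint: "(\<integral>\<^sup>+x. ennreal (f x) \<partial>lborel) = 1"
  proof -
    have "emeasure lam (space lam) = 1" using ps by (rule prob_space.emeasure_space_1)
    then show ?thesis unfolding lam_f by (subst (asm) emeasure_density) auto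
  qed
  obtain K where K1: "1 \<le> K" and KP: "1/2 \<le> (\<integral>\<^sup>+x. ennreal (f x * indicator {..K} x) \<partial>lborel)"
  proof -
    have "((\<lambda>M. \<integral>\<^sup>+s. ennreal (f s * indicator {..M} s) * 1 \<partial>lborel) \<longlongrightarrow> (\<integral>\<^sup>+s. ennreal (f s) * 1 \<partial>lborel)) at_top"
      by (rule mono1) (auto simp: fnn)
    then have "((\<lambda>M. \<integral>\<^sup>+s. ennreal (f s * indicator {..M} s) \<partial>lborel) \<longlongrightarrow> 1) at_top" by (simp add: fint)
    then have "eventually (\<lambda>M. 1/2 < (\<integral>\<^sup>+s. ennreal (f s * indicator {..M} s) \<partial>lborel)) at_top"
    proof (rule order_tendstoD)
      have h: "(1/2::ennreal) = ennreal (1/2)" using divide_ennreal[of 1 2] by simp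
      have "ennreal (1/2) < ennreal 1" by (rule ennreal_lessI) auto
      then show "(1/2::ennreal) < 1" unfolding h by simp
    qed
    then obtain K0 where "\<And>M. K0 \<le> M \<Longrightarrow> 1/2 < (\<integral>\<^sup>+s. ennreal (f s * indicator {..M} s) \<partial>lborel)"
      by (auto simp: eventually_at_top_linorder)
    then show ?thesis using that[of "max K0 1"] by (meson less_imp_le max.cobounded1 max.cobounded2)
  qed
  interpret C: constrP f K \<eta> \<theta>
    by unfold_locales (auto simp: fnn fint K1 KP eta th intro: fbelow[OF less_le_trans[OF _ a0]])
  define lams where "lams M = density lborel (\<lambda>x. ennreal (C.g M x))" for M
  have Q: "lams M \<in> Qset \<beta> \<gamma> \<xi>" for M
    unfolding Qset_def
  proof (intro CollectI conjI)
    show "prob_space (lams M)"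
      by (rule prob_spaceI) (simp add: lams_def emeasure_density C.g_mass)
    show "sets (lams M) = sets borel" by (simp add: lams_def)
    have "emeasure (lams M) {..<a} = (\<integral>\<^sup>+x. ennreal (C.g M x) * indicator {..<a} x \<partial>lborel)"
      unfolding lams_def by (rule emeasure_density) auto
    also have "\<dots> = (\<integral>\<^sup>+(x::real). 0 \<partial>lborel)"
      by (intro nn_integral_cong) (auto simp: indicator_def C.g_below[OF fbelow])
    finally show "emeasure (lams M) {..<\<beta> * (\<gamma>\<^sup>2 - kappa \<gamma> \<xi>)} = 0" unfolding a_def by simp
    show "\<exists>h\<in>borel_measurable borel. (\<forall>x. 0 \<le> h x \<and> \<beta> * kappa \<gamma> \<xi> * h x \<le> 1) \<and> lams M = density lborel (\<lambda>x. ennreal (h x))"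
    proof (intro bexI[of _ "C.g M"] conjI allI)
      fix x
      show "0 \<le> C.g M x" by (rule C.g_nonneg)
      have bk: "0 \<le> \<beta> * kappa \<gamma> \<xi>" using bet kap0 by simp
      have "\<beta> * kappa \<gamma> \<xi> * C.g M x \<le> \<beta> * kappa \<gamma> \<xi> * f x \<or> \<beta> * kappa \<gamma> \<xi> * C.g M x \<le> \<beta> * kappa \<gamma> \<xi> * f (x - (C.Mp M + 1))"
        using C.g_le[of M x] bk by (auto intro: mult_left_mono)
      moreover have "\<beta> * kappa \<gamma> \<xi> * f y \<le> 1" for y
        using mult_left_mono[OF fle[of y] bk] f0b[of y] by linarith
      ultimately show "\<beta> * kappa \<gamma> \<xi> * C.g M x \<le> 1" by (meson order_trans)
    qed (auto simp: lams_def)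
  qed
  have CS: "compactly_supported (lams M)" for M
    unfolding compactly_supported_def
  proof (intro exI conjI)
    show "compact {0..C.Mp M + 1 + K}" by simp
    have "emeasure (lams M) (UNIV - {0..C.Mp M + 1 + K}) = (\<integral>\<^sup>+x. ennreal (C.g M x) * indicator (UNIV - {0..C.Mp M + 1 + K}) x \<partial>lborel)"
      unfolding lams_def by (rule emeasure_density) auto
    also have "\<dots> = (\<integral>\<^sup>+(x::real). 0 \<partial>lborel)"
    proof (intro nn_integral_cong)
      fix x :: real
      show "ennreal (C.g M x) * indicator (UNIV - {0..C.Mp M + 1 + K}) x = 0"
        using C.g_supp[of M x] by (cases "C.g M x = 0") (auto simp: indicator_def)
    qed
    finally show "emeasure (lams M) (UNIV - {0..C.Mp M + 1 + K}) = 0" by simp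
  qed
  have W: "weak_conv_filter lams lam at_top"
    unfolding weak_conv_filter_def lams_def lam_f using C.weak by blast
  have E: "((\<lambda>M. Itilde \<eta> \<theta> \<beta> \<gamma> \<xi> (lams M)) \<longlongrightarrow> Itilde \<eta> \<theta> \<beta> \<gamma> \<xi> lam) at_top"
  proof -
    have fin: "ennreal ((kappa \<gamma> \<xi>)\<^sup>2 / 2) * XX \<eta> \<theta> f f < \<infinity>"
      "ennreal (kappa \<gamma> \<xi>) * (\<integral>\<^sup>+s. ennreal (f s) * psi0 \<eta> \<theta> \<beta> \<gamma> \<xi> (exp (- s)) \<partial>lborel) < \<infinity>"
      "cM \<eta> \<theta> \<gamma> \<xi> * (\<integral>\<^sup>+s. ennreal (f s) * nlog (exp (- s)) \<partial>lborel) < \<infinity>"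
      using assms(9) unfolding lam_f Itilde_dens[OF fm] by (simp_all add: ennreal_add_less_top)
    have t1: "((\<lambda>M. ennreal ((kappa \<gamma> \<xi>)\<^sup>2 / 2) * XX \<eta> \<theta> (C.g M) (C.g M)) \<longlongrightarrow> ennreal ((kappa \<gamma> \<xi>)\<^sup>2 / 2) * XX \<eta> \<theta> f f) at_top"
      by (rule cterm[OF fin(1)]) (simp_all add: C.HH_conv)
    have t2: "((\<lambda>M. ennreal (kappa \<gamma> \<xi>) * (\<integral>\<^sup>+s. ennreal (C.g M s) * psi0 \<eta> \<theta> \<beta> \<gamma> \<xi> (exp (- s)) \<partial>lborel))
        \<longlongrightarrow> ennreal (kappa \<gamma> \<xi>) * (\<integral>\<^sup>+s. ennreal (f s) * psi0 \<eta> \<theta> \<beta> \<gamma> \<xi> (exp (- s)) \<partial>lborel)) at_top"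
    proof (rule cterm[OF fin(2)])
      assume "(\<integral>\<^sup>+s. ennreal (f s) * psi0 \<eta> \<theta> \<beta> \<gamma> \<xi> (exp (- s)) \<partial>lborel) < \<infinity>"
      then show "((\<lambda>M. \<integral>\<^sup>+s. ennreal (C.g M s) * psi0 \<eta> \<theta> \<beta> \<gamma> \<xi> (exp (- s)) \<partial>lborel)
          \<longlongrightarrow> (\<integral>\<^sup>+s. ennreal (f s) * psi0 \<eta> \<theta> \<beta> \<gamma> \<xi> (exp (- s)) \<partial>lborel)) at_top"
        by (intro C.LIN[where C=0]) (use psi_shift[OF eta th] in auto)
    qed simp
    have t3: "((\<lambda>M. cM \<eta> \<theta> \<gamma> \<xi> * (\<integral>\<^sup>+s. ennreal (C.g M s) * nlog (exp (- s)) \<partial>lborel))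
        \<longlongrightarrow> cM \<eta> \<theta> \<gamma> \<xi> * (\<integral>\<^sup>+s. ennreal (f s) * nlog (exp (- s)) \<partial>lborel)) at_top"
    proof (rule cterm[OF fin(3)])
      assume *: "(\<integral>\<^sup>+s. ennreal (f s) * nlog (exp (- s)) \<partial>lborel) < \<infinity>"
      then show "((\<lambda>M. \<integral>\<^sup>+s. ennreal (C.g M s) * nlog (exp (- s)) \<partial>lborel)
          \<longlongrightarrow> (\<integral>\<^sup>+s. ennreal (f s) * nlog (exp (- s)) \<partial>lborel)) at_top"
        by (intro C.LIN[where C=1] C.nu_extra nu_shift) auto
    qed (simp add: cM_def)
    show ?thesis unfolding lams_def lam_f Itilde_dens[OF fm] Itilde_dens[OF C.g_meas]
      by (intro tendsto_add t1 t2 t3)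
  qed
  show ?thesis using Q CS W E by blast
qed

end
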